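(* Let $\varepsilon\in\{-1,1\}$, $\nu>0$ and let $l$ be a non-negative integer. Then there is $C>0$ such that $$\|\partial_x^l\big(S(\cdot,\cdot,t)-K(\cdot,\cdot,t)\big)\|_{L^\infty(\mathbb{R}^2)}\le C t^{-\frac74-\frac l2},\qquad t>0 .$$
   Context: Fourier transform on $\mathbb{R}^2$: $\hat f(\xi,\eta)=\frac{1}{2\pi}\int_{\mathbb{R}^2}e^{-ix\xi-iy\eta}f\,dx\,dy$, inverse $\mathcal{F}^{-1}[g](x,y)=\frac{1}{2\pi}\int_{\mathbb{R}^2}e^{ix\xi+iy\eta}g(\xi,\eta)\,d\xi\,d\eta$. $S(x,y,t):=\mathcal{F}^{-1}\big[\frac{1}{2\pi}e^{-\nu t\xi^2+it(\xi^3-\varepsilon\eta^2/\xi)}\big](x,y)$ (the kernel of the linear problem $\tilde u_t+\tilde u_{xxx}+\varepsilon\partial_x^{-1}\tilde u_{yy}-\nu\tilde u_{xx}=0$). $K(x,y,t):=t^{-5/4}K_*(xt^{-1/2},yt^{-3/4})$ for $t>0$, with $$K_*(x,y):=\frac{1}{4\pi^{3/2}\nu^{3/4}}\int_0^\infty r^{-1/4}e^{-r}\cos\Big(x\sqrt{\tfrac{r}{\nu}}+\frac{y^2}{4\varepsilon}\sqrt{\tfrac{r}{\nu}}-\frac{\pi}{4}\varepsilon\Big)\,dr .$$ *)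

theory Defs
  imports "HOL-Analysis.Analysis"
begin

text \<open>Kernel S of the linear problem, as the inverse Fourier transform
  F^{-1}[(1/2pi) exp(-nu t xi^2 + i t (xi^3 - eps eta^2/xi))](x,y).
  The symbol is not absolutely integrable in eta, so the transform is taken
  as the iterated integral: inner eta-integral as improper (Henstock-Kurzweil
  over the whole line) integral, then the xi-integral.
  The overall constant is (1/(2 pi)) * (1/(2 pi)).\<close>
definition S_kernel :: "real \<Rightarrow> real \<Rightarrow> real \<Rightarrow> real \<Rightarrow> real \<Rightarrow> complex" where
  "S_kernel \<epsilon> \<nu> x y t =
     (1 / (4 * of_real (pi\<^sup>2))) *
     integral UNIV (\<lambda>\<xi>::real. integral UNIV (\<lambda>\<eta>::real.
        exp (\<i> * of_real (x * \<xi> + y * \<eta>)) *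
        exp (of_real (- \<nu> * t * \<xi>\<^sup>2) + \<i> * of_real (t * (\<xi> ^ 3 - \<epsilon> * \<eta>\<^sup>2 / \<xi>)))))"

definition K_star :: "real \<Rightarrow> real \<Rightarrow> real \<Rightarrow> real \<Rightarrow> real" where
  "K_star \<epsilon> \<nu> x y =
     1 / (4 * pi powr (3/2) * \<nu> powr (3/4)) *
     integral {0<..} (\<lambda>r::real. r powr (-1/4) * exp (- r) *
        cos (x * sqrt (r / \<nu>) + y\<^sup>2 / (4 * \<epsilon>) * sqrt (r / \<nu>) - pi / 4 * \<epsilon>))"

definition K_kernel :: "real \<Rightarrow> real \<Rightarrow> real \<Rightarrow> real \<Rightarrow> real \<Rightarrow> real" where
  "K_kernel \<epsilon> \<nu> x y t = t powr (-5/4) * K_star \<epsilon> \<nu> (x * t powr (-1/2)) (y * t powr (-3/4))"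

definition xderiv :: "nat \<Rightarrow> (real \<Rightarrow> complex) \<Rightarrow> real \<Rightarrow> complex" where
  "xderiv l f = ((\<lambda>g. \<lambda>x. vector_derivative g (at x)) ^^ l) f"

end

theory Submission
  imports Defs "HOL-Probability.Probability" "HOL-Complex_Analysis.Complex_Analysis" "HOL-Real_Asymp.Real_Asymp"
begin

lemma gauss_lim: "((\<lambda>R. integral {0..R} (\<lambda>x::real. exp (- x\<^sup>2))) \<longlongrightarrow> sqrt pi / 2) at_top"
proof -
  have hb: "has_bochner_integral lborel (\<lambda>x. indicator {0..} x *\<^sub>R exp (- x\<^sup>2)) (sqrt pi / 2)"
    by (rule gaussian_moment_0)
  have int: "integrable lborel (\<lambda>x. indicator {0..} x *\<^sub>R exp (- (x::real)\<^sup>2))"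
    using hb by (auto simp: has_bochner_integral_iff)
  have hv: "(\<integral>x. indicator {0..} x *\<^sub>R exp (- (x::real)\<^sup>2) \<partial>lborel) = sqrt pi / 2"
    using hb by (simp add: has_bochner_integral_iff)
  have lim: "((\<lambda>y. \<integral>x. indicator {..y} x *\<^sub>R (indicator {0..} x *\<^sub>R exp (- x\<^sup>2)) \<partial>lborel) \<longlongrightarrow> sqrt pi / 2) at_top"
    using tendsto_integral_at_top[OF _ int] unfolding hv by simp
  show ?thesis
  proof (rule Lim_transform_eventually[OF lim])
    show "\<forall>\<^sub>F y in at_top. (\<integral>x. indicator {..y} x *\<^sub>R (indicator {0..} x *\<^sub>R exp (- x\<^sup>2)) \<partial>lborel) = integral {0..y} (\<lambda>x::real. exp (- x\<^sup>2))"
    proof (intro always_eventually allI)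
      fix y :: real
      have eq: "(\<lambda>x. indicator {..y} x *\<^sub>R (indicator {0..} x *\<^sub>R exp (- x\<^sup>2))) = (\<lambda>x::real. indicator {0..y} x *\<^sub>R exp (- x\<^sup>2))"
        by (auto simp: indicator_def fun_eq_iff)
      have si: "set_integrable lborel {0..y} (\<lambda>x::real. exp (- x\<^sup>2))"
        by (intro borel_integrable_atLeastAtMost' continuous_intros)
      show "(\<integral>x. indicator {..y} x *\<^sub>R (indicator {0..} x *\<^sub>R exp (- x\<^sup>2)) \<partial>lborel) = integral {0..y} (\<lambda>x::real. exp (- x\<^sup>2))"
        using set_borel_integral_eq_integral(2)[OF si] unfolding eq set_lebesgue_integral_def by simp
    qed
  qed
qed

definition fE :: "real \<Rightarrow> complex" where "fE s = exp (- (2 * \<i> * (of_real s)\<^sup>2))"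
definition fP :: "real \<Rightarrow> complex" where "fP R = integral {0..R} fE"

lemma cont_fE: "continuous_on A fE"
  unfolding fE_def by (intro continuous_intros)

lemma fE_has_int: "(fE has_integral fP R) {0..R}"
  unfolding fP_def by (intro integrable_integral integrable_continuous_interval cont_fE)

lemma C2_bound:
  assumes R: "R > 0"
  shows "norm (integral {0..R} (\<lambda>v. exp (- ((Complex R v)\<^sup>2)))) \<le> 1 / R"
proof -
  have int1: "(\<lambda>v. exp (- ((Complex R v)\<^sup>2))) integrable_on {0..R}"
    by (intro integrable_continuous_interval continuous_intros)
  have ftc: "((\<lambda>v. exp (- R * (R - v))) has_integral (exp (- R * (R - R)) / R - exp (- R * (R - 0)) / R)) {0..R}"
  proof (rule fundamental_theorem_of_calculus)
    show "0 \<le> R" using R by simp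
    fix x assume "x \<in> {0..R}"
    have "((\<lambda>v. exp (- R * (R - v)) / R) has_real_derivative (exp (- R * (R - x)) * R / R)) (at x)"
      by (auto intro!: derivative_eq_intros)
    then show "((\<lambda>v. exp (- R * (R - v)) / R) has_vector_derivative exp (- R * (R - x))) (at x within {0..R})"
      using R by (simp add: has_real_derivative_iff_has_vector_derivative[symmetric] has_field_derivative_at_within)
  qed
  have "norm (integral {0..R} (\<lambda>v. exp (- ((Complex R v)\<^sup>2)))) \<le> integral {0..R} (\<lambda>v. exp (- R * (R - v)))"
  proof (rule integral_norm_bound_integral[OF int1])
    show "(\<lambda>v. exp (- R * (R - v))) integrable_on {0..R}" using ftc by blast
    fix v assume v: "v \<in> {0..R}"
    have "norm (exp (- ((Complex R v)\<^sup>2))) = exp (- (R\<^sup>2 - v\<^sup>2))"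
      by (simp add: norm_exp_eq_Re power2_eq_square)
    also have "\<dots> \<le> exp (- R * (R - v))"
      using v R mult_right_mono[of v R v] by (auto simp: power2_eq_square algebra_simps)
    finally show "norm (exp (- ((Complex R v)\<^sup>2))) \<le> exp (- R * (R - v))" .
  qed
  also have "\<dots> = 1 / R - exp (- R * R) / R" using integral_unique[OF ftc] by simp
  also have "\<dots> \<le> 1 / R" using R by simp
  finally show ?thesis .
qed

lemma triangle_identity:
  assumes R: "R > 0"
  shows "(1 + \<i>) * fP R = of_real (integral {0..R} (\<lambda>x::real. exp (- x\<^sup>2))) + \<i> * integral {0..R} (\<lambda>v. exp (- ((Complex R v)\<^sup>2)))"
proof -
  define f :: "complex \<Rightarrow> complex" where "f = (\<lambda>z. exp (- (z\<^sup>2)))"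
  define w where "w = (1 + \<i>) * of_real R"
  have wR: "w = Complex R R" by (simp add: w_def complex_eq_iff)
  have tri: "(f has_contour_integral 0) (linepath 0 (of_real R) +++ linepath (of_real R) w +++ linepath w 0)"
    by (rule Cauchy_theorem_triangle) (auto simp: f_def intro!: holomorphic_intros)
  have h1: "(f has_contour_integral of_real (integral {0..R} (\<lambda>x::real. exp (- x\<^sup>2)))) (linepath 0 (of_real R))"
  proof -
    have gi: "((\<lambda>x::real. exp (- x\<^sup>2)) has_integral integral {0..R} (\<lambda>x::real. exp (- x\<^sup>2))) {0..R}"
      by (intro integrable_integral integrable_continuous_interval continuous_intros)
    have "((\<lambda>x. f (of_real x)) has_integral of_real (integral {0..R} (\<lambda>x::real. exp (- x\<^sup>2)))) {Re 0..Re (of_real R)}"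
    proof -
      have eqf: "(\<lambda>x::real. f (of_real x)) = (\<lambda>x. of_real (exp (-x\<^sup>2)))"
        by (simp add: f_def fun_eq_iff flip: exp_of_real)
      show ?thesis unfolding eqf using has_integral_of_real[OF gi] by simp
    qed
    then show ?thesis using has_contour_integral_linepath_Reals_iff[of 0 "of_real R" f] R by simp
  qed
  define J where "J = integral {0..R} (\<lambda>v. exp (- ((Complex R v)\<^sup>2)))"
  have h2: "(f has_contour_integral (\<i> * J)) (linepath (of_real R) w)"
  proof -
    have "((\<lambda>v. f (Complex R v)) has_integral J) {0..R}"
      unfolding J_def f_def by (intro integrable_integral integrable_continuous_interval continuous_intros)
    then have "((\<lambda>v. f (Complex R v)) has_integral (- \<i> * (\<i> * J))) {0..R}" by simp
    then show ?thesis
      using has_contour_integral_linepath_same_Re_iff[of "of_real R" R w 0 R f "\<i> * J"] R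
      by (simp add: wR)
  qed
  have h3: "(f has_contour_integral (- ((1 + \<i>) * fP R))) (linepath w 0)"
  proof -
    have a: "((\<lambda>x. fE (R *\<^sub>R x + 0)) has_integral (fP R /\<^sub>R R ^ DIM(real))) (cbox ((0 - 0) /\<^sub>R R) ((R - 0) /\<^sub>R R))"
      using has_integral_affinity'[OF fE_has_int[of R, unfolded box_real(2)[symmetric]] R] .
    then have "((\<lambda>x. fE (R * x)) has_integral (fP R / of_real R)) {0..1}"
      using R by (simp add: scaleR_conv_of_real divide_inverse mult.commute)
    then have "((\<lambda>x. fE (R * x) * w) has_integral (fP R / of_real R * w)) {0..1}"
      by (rule has_integral_mult_left)
    moreover have "fP R / of_real R * w = (1 + \<i>) * fP R" using R by (simp add: w_def field_simps)
    moreover have "fE (R * x) * w = f (linepath 0 w x) * (w - 0)" for x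
    proof -
      have sq: "((of_real x::complex) * ((1+\<i>) * of_real R))\<^sup>2 = 2*\<i>*(of_real (R*x))\<^sup>2"
        by (simp add: power2_eq_square algebra_simps)
      show ?thesis by (simp add: fE_def f_def scaleR_conv_of_real w_def sq)
    qed
    ultimately have "(f has_contour_integral ((1 + \<i>) * fP R)) (linepath 0 w)"
      unfolding has_contour_integral_linepath by simp
    from has_contour_integral_reversepath[OF _ this] show ?thesis by simp
  qed
  have "(f has_contour_integral (of_real (integral {0..R} (\<lambda>x::real. exp (- x\<^sup>2))) + (\<i> * J + - ((1 + \<i>) * fP R))))
      (linepath 0 (of_real R) +++ linepath (of_real R) w +++ linepath w 0)"
    by (intro has_contour_integral_join h1 h2 h3 valid_path_join) auto
  from has_contour_integral_unique[OF this tri] show ?thesis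
    unfolding J_def by (simp add: algebra_simps eq_neg_iff_add_eq_0)
qed


lemma fresnel_lim: "(fP \<longlongrightarrow> of_real (sqrt pi / 2) / (1 + \<i>)) at_top"
proof -
  define J where "J R = integral {0..R} (\<lambda>v. exp (- ((Complex R v)\<^sup>2)))" for R
  have J0: "(J \<longlongrightarrow> 0) at_top"
  proof (rule Lim_null_comparison)
    show "\<forall>\<^sub>F R in at_top. norm (J R) \<le> 1 / R"
      using eventually_gt_at_top[of 0] by eventually_elim (simp add: J_def C2_bound)
    show "((\<lambda>R::real. 1 / R) \<longlongrightarrow> 0) at_top" by real_asymp
  qed
  have "((\<lambda>R. (of_real (integral {0..R} (\<lambda>x::real. exp (- x\<^sup>2))) + \<i> * J R) / (1 + \<i>)) \<longlongrightarrow> (of_real (sqrt pi / 2) + \<i> * 0) / (1 + \<i>)) at_top"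
    by (intro tendsto_intros gauss_lim J0) (simp add: complex_eq_iff)
  then have L: "((\<lambda>R. (of_real (integral {0..R} (\<lambda>x::real. exp (- x\<^sup>2))) + \<i> * J R) / (1 + \<i>)) \<longlongrightarrow> of_real (sqrt pi / 2) / (1 + \<i>)) at_top"
    by simp
  have ev: "\<forall>\<^sub>F R in at_top. (of_real (integral {0..R} (\<lambda>x::real. exp (- x\<^sup>2))) + \<i> * J R) / (1 + \<i>) = fP R"
    using eventually_gt_at_top[of 0]
  proof eventually_elim
    case (elim R)
    have "1 + \<i> \<noteq> 0" by (simp add: complex_eq_iff)
    then show ?case
      using triangle_identity[OF elim] unfolding J_def by (simp add: field_simps)
  qed
  show ?thesis by (rule Lim_transform_eventually[OF L ev])
qed

lemma fE_even: "fE (- x) = fE x"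
  by (simp add: fE_def)

lemma fE_interval:
  assumes "\<alpha> \<le> 0" "0 \<le> \<beta>"
  shows "(fE has_integral (fP (-\<alpha>) + fP \<beta>)) {\<alpha>..\<beta>}"
proof -
  have "((\<lambda>x. fE (- x)) has_integral fP (-\<alpha>)) {- (-\<alpha>)..- 0}"
    using fE_has_int[of "-\<alpha>"] by (subst has_integral_reflect_real) 
  then have "(fE has_integral fP (-\<alpha>)) {\<alpha>..0}" by (simp add: fE_even)
  from has_integral_combine[OF assms this fE_has_int[of \<beta>]] show ?thesis .
qed

lemma UNIV_from_intervals:
  fixes f :: "real \<Rightarrow> complex"
  assumes H: "\<And>e. e > 0 \<Longrightarrow> \<exists>B. \<forall>a b. a \<le> -B \<longrightarrow> B \<le> b \<longrightarrow> (\<exists>z. (f has_integral z) {a..b} \<and> norm (z - I) < e)"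
  shows "(f has_integral I) UNIV"
proof -
  have nb: "\<not> (\<exists>a b. (UNIV::real set) = cbox a b)"
    by (metis bounded_cbox not_bounded_UNIV)
  show ?thesis
  proof (subst has_integral_alt, simp only: nb if_False, intro allI impI)
    fix e :: real assume e: "e > 0"
    obtain B where B: "\<forall>a b. a \<le> -B \<longrightarrow> B \<le> b \<longrightarrow> (\<exists>z. (f has_integral z) {a..b} \<and> norm (z - I) < e)"
      using H[OF e] by blast
    show "\<exists>B>0. \<forall>a b. ball 0 B \<subseteq> cbox a b \<longrightarrow> (\<exists>z. ((\<lambda>x. if x \<in> UNIV then f x else 0) has_integral z) (cbox a b) \<and> norm (z - I) < e)"
    proof (intro exI[of _ "max B 1"] conjI allI impI)
      show "0 < max B 1" by simp
      fix a b :: real assume sub: "ball 0 (max B 1) \<subseteq> cbox a b"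
      have a: "a \<le> - B"
      proof (rule ccontr)
        assume "\<not> a \<le> - B"
        define x where "x = (a - max B 1) / 2"
        have "(0::real) \<in> ball 0 (max B 1)" by simp
        then have "0 \<in> cbox a b" using sub by blast
        then have "a \<le> 0" by simp
        then have "x \<in> ball 0 (max B 1)" using \<open>\<not> a \<le> - B\<close> by (auto simp: x_def dist_real_def)
        moreover have "x \<notin> cbox a b" using \<open>\<not> a \<le> - B\<close> by (auto simp: x_def)
        ultimately show False using sub by blast
      qed
      have b: "B \<le> b"
      proof (rule ccontr)
        assume "\<not> B \<le> b"
        define x where "x = (b + max B 1) / 2"
        have "(0::real) \<in> ball 0 (max B 1)" by simp
        then have "0 \<in> cbox a b" using sub by blast
        then have "0 \<le> b" by simp
        then have "x \<in> ball 0 (max B 1)" using \<open>\<not> B \<le> b\<close> by (auto simp: x_def dist_real_def)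
        moreover have "x \<notin> cbox a b" using \<open>\<not> B \<le> b\<close> by (auto simp: x_def)
        ultimately show False using sub by blast
      qed
      show "\<exists>z. ((\<lambda>x. if x \<in> UNIV then f x else 0) has_integral z) (cbox a b) \<and> norm (z - I) < e"
        using B a b by simp
    qed
  qed
qed


lemma fresnel_generic:
  fixes G Q :: "real \<Rightarrow> complex" and A L :: complex and \<sigma> \<eta>0 :: real
  assumes GI: "\<And>\<alpha> \<beta>. \<alpha> \<le> 0 \<Longrightarrow> 0 \<le> \<beta> \<Longrightarrow> (G has_integral (Q (-\<alpha>) + Q \<beta>)) {\<alpha>..\<beta>}"
    and QL: "(Q \<longlongrightarrow> L) at_top"
    and sig: "\<sigma> > 0"
  shows "((\<lambda>\<eta>. A * G (\<sigma> * \<eta> + - (\<sigma> * \<eta>0))) has_integral (A * (2 * L) / of_real \<sigma>)) UNIV"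
proof (rule UNIV_from_intervals)
  fix e :: real assume e: "e > 0"
  define e' where "e' = e * \<sigma> / (2 * (norm A + 1))"
  have e': "e' > 0" using e sig unfolding e'_def by (intro divide_pos_pos mult_pos_pos) (auto intro: add_nonneg_pos)
  have "\<forall>\<^sub>F R in at_top. dist (Q R) L < e'" using tendstoD[OF QL e'] .
  then obtain N where N: "\<And>R. R \<ge> N \<Longrightarrow> dist (Q R) L < e'" by (auto simp: eventually_at_top_linorder)
  show "\<exists>B. \<forall>a b. a \<le> -B \<longrightarrow> B \<le> b \<longrightarrow> (\<exists>z. ((\<lambda>\<eta>. A * G (\<sigma> * \<eta> + - (\<sigma> * \<eta>0))) has_integral z) {a..b} \<and> norm (z - A * (2 * L) / of_real \<sigma>) < e)"
  proof (intro exI[of _ "\<bar>\<eta>0\<bar> + \<bar>N\<bar> / \<sigma> + 1"] allI impI)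
    fix a b assume a: "a \<le> - (\<bar>\<eta>0\<bar> + \<bar>N\<bar> / \<sigma> + 1)" and b: "\<bar>\<eta>0\<bar> + \<bar>N\<bar> / \<sigma> + 1 \<le> b"
    define \<alpha> where "\<alpha> = \<sigma> * (a - \<eta>0)"
    define \<beta> where "\<beta> = \<sigma> * (b - \<eta>0)"
    have Nle: "\<bar>N\<bar> / \<sigma> * \<sigma> = \<bar>N\<bar>" using sig by simp
    have al: "- \<alpha> \<ge> \<bar>N\<bar>"
    proof -
      have "\<eta>0 - a \<ge> \<bar>N\<bar> / \<sigma>" using a by linarith
      then have "\<sigma> * (\<eta>0 - a) \<ge> \<sigma> * (\<bar>N\<bar> / \<sigma>)" using sig by (intro mult_left_mono) auto
      then show ?thesis using sig by (simp add: \<alpha>_def algebra_simps)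
    qed
    have be: "\<beta> \<ge> \<bar>N\<bar>"
    proof -
      have "b - \<eta>0 \<ge> \<bar>N\<bar> / \<sigma>" using b by linarith
      then have "\<sigma> * (b - \<eta>0) \<ge> \<sigma> * (\<bar>N\<bar> / \<sigma>)" using sig by (intro mult_left_mono) auto
      then show ?thesis using sig by (simp add: \<beta>_def algebra_simps)
    qed
    have "\<alpha> \<le> 0" "0 \<le> \<beta>" using al be by auto
    from GI[OF this] have "(G has_integral (Q (-\<alpha>) + Q \<beta>)) (cbox \<alpha> \<beta>)" by simp
    from has_integral_affinity'[OF this sig, of "- (\<sigma> * \<eta>0)"]
    have "((\<lambda>x. G (\<sigma> * x + - (\<sigma> * \<eta>0))) has_integral ((Q (-\<alpha>) + Q \<beta>) /\<^sub>R \<sigma>)) {a..b}"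
      using sig by (simp add: \<alpha>_def \<beta>_def algebra_simps) (simp add: field_simps)
    then have I: "((\<lambda>x. A * G (\<sigma> * x + - (\<sigma> * \<eta>0))) has_integral (A * ((Q (-\<alpha>) + Q \<beta>) /\<^sub>R \<sigma>))) {a..b}"
      by (rule has_integral_mult_right)
    have d1: "norm (Q (-\<alpha>) - L) < e'" using N[of "-\<alpha>"] al by (simp add: dist_norm)
    have d2: "norm (Q \<beta> - L) < e'" using N[of "\<beta>"] be by (simp add: dist_norm)
    have eq: "A * ((Q (-\<alpha>) + Q \<beta>) /\<^sub>R \<sigma>) - A * (2 * L) / of_real \<sigma> = A * ((Q (-\<alpha>) - L) + (Q \<beta> - L)) / of_real \<sigma>"
      using sig by (simp add: scaleR_conv_of_real field_simps)
    have "norm (A * ((Q (-\<alpha>) - L) + (Q \<beta> - L)) / of_real \<sigma>) = norm A * norm ((Q (-\<alpha>) - L) + (Q \<beta> - L)) / \<sigma>"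
      using sig by (simp add: norm_mult norm_divide)
    also have "\<dots> \<le> norm A * (2 * e') / \<sigma>"
    proof -
      have "norm ((Q (-\<alpha>) - L) + (Q \<beta> - L)) \<le> 2 * e'"
        using norm_triangle_ineq[of "Q (-\<alpha>) - L" "Q \<beta> - L"] d1 d2 by linarith
      then show ?thesis using sig by (intro divide_right_mono mult_left_mono) auto
    qed
    also have "\<dots> = e * (norm A / (norm A + 1))"
    proof -
      have p: "norm A + 1 > 0" by (simp add: add_nonneg_pos)
      have k: "2 * e' / \<sigma> = e / (norm A + 1)"
        unfolding e'_def using sig p by (simp add: divide_simps)
      have "norm A * (2 * e') / \<sigma> = norm A * (2 * e' / \<sigma>)" by simp
      then show ?thesis unfolding k by simp
    qed
    also have "\<dots> < e"
    proof -
      have p: "norm A + 1 > 0" by (simp add: add_nonneg_pos)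
      then have "norm A / (norm A + 1) < 1" by (simp add: divide_less_eq)
      then show ?thesis using e mult_strict_left_mono[of "norm A / (norm A + 1)" 1 e] by simp
    qed
    finally show "\<exists>z. ((\<lambda>\<eta>. A * G (\<sigma> * \<eta> + - (\<sigma> * \<eta>0))) has_integral z) {a..b} \<and> norm (z - A * (2 * L) / of_real \<sigma>) < e"
      using I eq by metis
  qed
qed

definition FR :: "real \<Rightarrow> real \<Rightarrow> complex" where
  "FR c y = of_real (sqrt (pi / \<bar>c\<bar>)) * exp (- \<i> * of_real (pi * sgn c / 4)) * exp (\<i> * of_real (y\<^sup>2 / (4 * c)))"

lemma exp_pi4: "exp (- \<i> * of_real (pi / 4)) = of_real (sqrt 2 / 2) * (1 - \<i>)"
proof -
  have "exp (- \<i> * of_real (pi / 4)) = cis (- (pi / 4))"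
    by (simp add: cis_conv_exp)
  also have "\<dots> = of_real (sqrt 2 / 2) * (1 - \<i>)"
    by (simp add: cis.code cos_45 sin_45 complex_eq_iff)
  finally show ?thesis .
qed

lemma exp_mpi4: "exp (\<i> * of_real (pi / 4)) = of_real (sqrt 2 / 2) * (1 + \<i>)"
proof -
  have "exp (\<i> * of_real (pi / 4)) = cis (pi / 4)"
    by (simp add: cis_conv_exp)
  also have "\<dots> = of_real (sqrt 2 / 2) * (1 + \<i>)"
    by (simp add: cis.code cos_45 sin_45 complex_eq_iff)
  finally show ?thesis .
qed

lemma sqrt_aux:
  assumes "c > 0"
  shows "sqrt pi / (2 * sqrt (c / 2)) = sqrt (pi / c) * (sqrt 2 / 2)"
proof -
  have "sqrt (pi / c) * sqrt (c / 2) * sqrt 2 = sqrt (pi / c * (c / 2) * 2)" by (metis real_sqrt_mult)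
  also have "pi / c * (c / 2) * 2 = pi" using assms by simp
  finally have e: "sqrt (pi / c) * sqrt (c / 2) * sqrt 2 = sqrt pi" .
  have "sqrt (c / 2) > 0" using assms by simp
  then show ?thesis using e by (simp add: field_simps)
qed

lemma fresnel_UNIV:
  fixes c y :: real
  assumes c: "c \<noteq> 0"
  shows "((\<lambda>\<eta>::real. exp (\<i> * of_real (y * \<eta> - c * \<eta>\<^sup>2))) has_integral FR c y) UNIV"
proof -
  define \<sigma> where "\<sigma> = sqrt (\<bar>c\<bar> / 2)"
  define \<eta>0 where "\<eta>0 = y / (2 * c)"
  define A where "A = exp (\<i> * of_real (y\<^sup>2 / (4 * c)))"
  define L0 where "L0 = of_real (sqrt pi / 2) / (1 + \<i>)"
  have sig: "\<sigma> > 0" using c by (simp add: \<sigma>_def)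
  have sig2: "\<sigma>\<^sup>2 = \<bar>c\<bar> / 2" by (simp add: \<sigma>_def)
  have sq: "(\<sigma> * \<eta> + - (\<sigma> * \<eta>0))\<^sup>2 = \<bar>c\<bar> / 2 * (\<eta> - \<eta>0)\<^sup>2" for \<eta>
  proof -
    have "(\<sigma> * \<eta> + - (\<sigma> * \<eta>0))\<^sup>2 = \<sigma>\<^sup>2 * (\<eta> - \<eta>0)\<^sup>2" by (simp add: power2_eq_square algebra_simps)
    then show ?thesis by (simp add: sig2)
  qed
  have keyid: "c * (\<eta> - \<eta>0)\<^sup>2 = c * \<eta>\<^sup>2 - y * \<eta> + y\<^sup>2 / (4 * c)" for \<eta>
    using c by (simp add: \<eta>0_def power2_eq_square field_simps)
  have p1i: "1 + \<i> \<noteq> 0" "1 - \<i> \<noteq> 0" by (simp_all add: complex_eq_iff)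
  show ?thesis
  proof (cases "c > 0")
    case True
    have gen: "((\<lambda>\<eta>. A * fE (\<sigma> * \<eta> + - (\<sigma> * \<eta>0))) has_integral (A * (2 * L0) / of_real \<sigma>)) UNIV"
      by (rule fresnel_generic[OF fE_interval _ sig]) (use fresnel_lim in \<open>simp_all add: L0_def\<close>)
    have pw: "A * fE (\<sigma> * \<eta> + - (\<sigma> * \<eta>0)) = exp (\<i> * of_real (y * \<eta> - c * \<eta>\<^sup>2))" for \<eta>
    proof -
      have s: "(\<sigma> * \<eta> - \<sigma> * \<eta>0)\<^sup>2 = \<bar>c\<bar> / 2 * (\<eta> - \<eta>0)\<^sup>2" using sq[of \<eta>] by simp
      have "2 * (\<sigma> * \<eta> + - (\<sigma> * \<eta>0))\<^sup>2 = c * \<eta>\<^sup>2 - y * \<eta> + y\<^sup>2 / (4 * c)"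
        using True s by (simp add: keyid[symmetric])
      then have e: "y\<^sup>2 / (4 * c) - 2 * (\<sigma> * \<eta> + - (\<sigma> * \<eta>0))\<^sup>2 = y * \<eta> - c * \<eta>\<^sup>2" by simp
      have "A * fE (\<sigma> * \<eta> + - (\<sigma> * \<eta>0)) = exp (\<i> * of_real (y\<^sup>2 / (4 * c)) + - (2 * \<i> * (of_real (\<sigma> * \<eta> + - (\<sigma> * \<eta>0)))\<^sup>2))"
        unfolding A_def fE_def by (rule exp_add[symmetric])
      also have "\<i> * of_real (y\<^sup>2 / (4 * c)) + - (2 * \<i> * (of_real (\<sigma> * \<eta> + - (\<sigma> * \<eta>0)))\<^sup>2) = \<i> * of_real (y\<^sup>2 / (4 * c) - 2 * (\<sigma> * \<eta> + - (\<sigma> * \<eta>0))\<^sup>2)"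
        by (simp add: algebra_simps)
      finally show ?thesis unfolding e .
    qed
    have val: "A * (2 * L0) / of_real \<sigma> = FR c y"
    proof -
      have s1: "A * (2 * L0) / of_real \<sigma> = A * of_real (sqrt pi / (2 * \<sigma>)) * (2 / (1 + \<i>))"
        using sig p1i by (simp add: L0_def field_simps)
      have s2: "2 / (1 + \<i>) = 1 - \<i>"
      proof -
        have m: "(1 - \<i>) * (1 + \<i>) = 2" by (simp add: complex_eq_iff)
        show ?thesis by (metis m p1i(1) nonzero_mult_div_cancel_right)
      qed
      have kval: "sqrt pi / (2 * \<sigma>) = sqrt (pi / c) * (sqrt 2 / 2)"
        using sqrt_aux[OF True] True by (simp add: \<sigma>_def)
      have ex: "exp (- \<i> * of_real (pi * sgn c / 4)) = of_real (sqrt 2 / 2) * (1 - \<i>)"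
        using True exp_pi4 by simp
      have s3: "FR c y = of_real (sqrt (pi / c)) * (of_real (sqrt 2 / 2) * (1 - \<i>)) * A"
        unfolding FR_def ex A_def using True by simp
      show ?thesis unfolding s1 s2 kval s3 of_real_mult by (simp only: mult_ac)
    qed
    show ?thesis using gen unfolding pw val .
  next
    case False
    with c have cn: "c < 0" by simp
    have GI: "((cnj \<circ> fE) has_integral ((cnj \<circ> fP) (-\<alpha>) + (cnj \<circ> fP) \<beta>)) {\<alpha>..\<beta>}"
      if "\<alpha> \<le> 0" "0 \<le> \<beta>" for \<alpha> \<beta>
      using fE_interval[OF that] has_integral_cnj[of fE "fP (-\<alpha>) + fP \<beta>"] by simp
    have QL: "((cnj \<circ> fP) \<longlongrightarrow> cnj L0) at_top"
      unfolding o_def L0_def using tendsto_cnj[OF fresnel_lim] by simp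
    have gen: "((\<lambda>\<eta>. A * (cnj \<circ> fE) (\<sigma> * \<eta> + - (\<sigma> * \<eta>0))) has_integral (A * (2 * cnj L0) / of_real \<sigma>)) UNIV"
      by (rule fresnel_generic[OF GI QL sig])
    have pw: "A * (cnj \<circ> fE) (\<sigma> * \<eta> + - (\<sigma> * \<eta>0)) = exp (\<i> * of_real (y * \<eta> - c * \<eta>\<^sup>2))" for \<eta>
    proof -
      have s: "(\<sigma> * \<eta> - \<sigma> * \<eta>0)\<^sup>2 = \<bar>c\<bar> / 2 * (\<eta> - \<eta>0)\<^sup>2" using sq[of \<eta>] by simp
      have "2 * (\<sigma> * \<eta> + - (\<sigma> * \<eta>0))\<^sup>2 = - (c * \<eta>\<^sup>2 - y * \<eta> + y\<^sup>2 / (4 * c))"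
        using cn s by (simp add: keyid[symmetric])
      then have e: "y\<^sup>2 / (4 * c) + 2 * (\<sigma> * \<eta> + - (\<sigma> * \<eta>0))\<^sup>2 = y * \<eta> - c * \<eta>\<^sup>2" by simp
      have "A * (cnj \<circ> fE) (\<sigma> * \<eta> + - (\<sigma> * \<eta>0)) = exp (\<i> * of_real (y\<^sup>2 / (4 * c)) + (2 * \<i> * (of_real (\<sigma> * \<eta> + - (\<sigma> * \<eta>0)))\<^sup>2))"
      proof -
        have "(cnj \<circ> fE) s = exp (2 * \<i> * (of_real s)\<^sup>2)" for s
          by (simp add: fE_def exp_cnj)
        then show ?thesis unfolding A_def by (simp only: exp_add)
      qed
      also have "\<i> * of_real (y\<^sup>2 / (4 * c)) + (2 * \<i> * (of_real (\<sigma> * \<eta> + - (\<sigma> * \<eta>0)))\<^sup>2) = \<i> * of_real (y\<^sup>2 / (4 * c) + 2 * (\<sigma> * \<eta> + - (\<sigma> * \<eta>0))\<^sup>2)"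
        by (simp add: algebra_simps)
      finally show ?thesis unfolding e .
    qed
    have val: "A * (2 * cnj L0) / of_real \<sigma> = FR c y"
    proof -
      have s1: "A * (2 * cnj L0) / of_real \<sigma> = A * of_real (sqrt pi / (2 * \<sigma>)) * (2 / (1 - \<i>))"
        using sig p1i by (simp add: L0_def field_simps)
      have s2: "2 / (1 - \<i>) = 1 + \<i>"
      proof -
        have m: "(1 + \<i>) * (1 - \<i>) = 2" by (simp add: complex_eq_iff)
        show ?thesis by (metis m p1i(2) nonzero_mult_div_cancel_right)
      qed
      have kval: "sqrt pi / (2 * \<sigma>) = sqrt (pi / \<bar>c\<bar>) * (sqrt 2 / 2)"
        using sqrt_aux[of "\<bar>c\<bar>"] cn by (simp add: \<sigma>_def)
      have ex: "exp (- \<i> * of_real (pi * sgn c / 4)) = of_real (sqrt 2 / 2) * (1 + \<i>)"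
        using cn exp_mpi4 by simp
      have s3: "FR c y = of_real (sqrt (pi / \<bar>c\<bar>)) * (of_real (sqrt 2 / 2) * (1 + \<i>)) * A"
        unfolding FR_def ex A_def by simp
      show ?thesis unfolding s1 s2 kval s3 of_real_mult by (simp only: mult_ac)
    qed
    show ?thesis using gen unfolding pw val .
  qed
qed

lemma integrable_expmult:
  fixes f :: "real \<Rightarrow> complex"
  assumes f: "integrable lborel f"
  shows "integrable lborel (\<lambda>\<xi>. exp (\<i> * of_real (x * \<xi>)) * f \<xi>)"
proof (rule Bochner_Integration.integrable_bound[OF f])
  show "(\<lambda>\<xi>. exp (\<i> * of_real (x * \<xi>)) * f \<xi>) \<in> borel_measurable lborel"
    using borel_measurable_integrable[OF f] by measurable
  show "AE \<xi> in lborel. norm (exp (\<i> * of_real (x * \<xi>)) * f \<xi>) \<le> norm (f \<xi>)"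
    by (simp add: norm_mult)
qed

lemma fourier_deriv0:
  fixes g :: "real \<Rightarrow> complex"
  assumes g0: "integrable lborel g" and g1: "integrable lborel (\<lambda>\<xi>. of_real \<xi> * g \<xi>)"
    and g2: "integrable lborel (\<lambda>\<xi>. (of_real \<xi>)^2 * g \<xi>)"
  shows "((\<lambda>x. \<integral>\<xi>. exp (\<i> * of_real (x * \<xi>)) * g \<xi> \<partial>lborel) has_vector_derivative
          (\<integral>\<xi>. exp (\<i> * of_real (x * \<xi>)) * (\<i> * of_real \<xi> * g \<xi>) \<partial>lborel)) (at x)"
proof -
  define \<Phi> where "\<Phi> x = (\<integral>\<xi>. exp (\<i> * of_real (x * \<xi>)) * g \<xi> \<partial>lborel)" for x
  define D where "D = (\<integral>\<xi>. exp (\<i> * of_real (x * \<xi>)) * (\<i> * of_real \<xi> * g \<xi>) \<partial>lborel)"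
  define M where "M = (\<integral>\<xi>. norm ((of_real \<xi>)^2 * g \<xi>) \<partial>lborel) / 2"
  have M0: "M \<ge> 0" unfolding M_def by simp
  have g1': "integrable lborel (\<lambda>\<xi>. \<i> * of_real \<xi> * g \<xi>)"
    using integrable_mult_right[OF g1, of \<i>] by (simp add: mult.assoc)
  have bound: "norm (\<Phi> y - \<Phi> x - (y - x) *\<^sub>R D) \<le> M * (y - x)\<^sup>2" for y
  proof -
    define u where "u = y - x"
    have eq: "\<Phi> y - \<Phi> x - (y - x) *\<^sub>R D = (\<integral>\<xi>. exp (\<i> * of_real (x * \<xi>)) * ((exp (\<i> * of_real (u * \<xi>)) - 1 - \<i> * of_real (u * \<xi>)) * g \<xi>) \<partial>lborel)"
    proof -
      have i1: "integrable lborel (\<lambda>\<xi>. exp (\<i> * of_real (y * \<xi>)) * g \<xi>)" by (rule integrable_expmult[OF g0])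
      have i2: "integrable lborel (\<lambda>\<xi>. exp (\<i> * of_real (x * \<xi>)) * g \<xi>)" by (rule integrable_expmult[OF g0])
      have i3: "integrable lborel (\<lambda>\<xi>. exp (\<i> * of_real (x * \<xi>)) * (\<i> * of_real \<xi> * g \<xi>))" by (rule integrable_expmult[OF g1'])
      have "\<Phi> y - \<Phi> x - (y - x) *\<^sub>R D = (\<integral>\<xi>. exp (\<i> * of_real (y * \<xi>)) * g \<xi> - exp (\<i> * of_real (x * \<xi>)) * g \<xi> - of_real u * (exp (\<i> * of_real (x * \<xi>)) * (\<i> * of_real \<xi> * g \<xi>)) \<partial>lborel)"
        unfolding \<Phi>_def D_def u_def scaleR_conv_of_real
        using i1 i2 i3 by (simp add: Bochner_Integration.integral_diff integrable_mult_right)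
      also have "\<dots> = (\<integral>\<xi>. exp (\<i> * of_real (x * \<xi>)) * ((exp (\<i> * of_real (u * \<xi>)) - 1 - \<i> * of_real (u * \<xi>)) * g \<xi>) \<partial>lborel)"
      proof (rule Bochner_Integration.integral_cong[OF refl])
        fix \<xi>
        have "exp (\<i> * of_real (y * \<xi>)) = exp (\<i> * of_real (x * \<xi>)) * exp (\<i> * of_real (u * \<xi>))"
          by (simp add: u_def exp_add[symmetric] algebra_simps)
        then show "exp (\<i> * of_real (y * \<xi>)) * g \<xi> - exp (\<i> * of_real (x * \<xi>)) * g \<xi> - of_real u * (exp (\<i> * of_real (x * \<xi>)) * (\<i> * of_real \<xi> * g \<xi>)) =
            exp (\<i> * of_real (x * \<xi>)) * ((exp (\<i> * of_real (u * \<xi>)) - 1 - \<i> * of_real (u * \<xi>)) * g \<xi>)"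
          by (simp add: algebra_simps)
      qed
      finally show ?thesis .
    qed
    have pw: "norm (exp (\<i> * of_real (x * \<xi>)) * ((exp (\<i> * of_real (u * \<xi>)) - 1 - \<i> * of_real (u * \<xi>)) * g \<xi>)) \<le> u\<^sup>2 / 2 * norm ((of_real \<xi>)^2 * g \<xi>)" for \<xi>
    proof -
      have a: "cmod (iexp (u * \<xi>) - (\<Sum>k \<le> 1. (\<i> * of_real (u * \<xi>))^k / fact k)) \<le> \<bar>u * \<xi>\<bar>^(Suc 1) / fact (Suc 1)"
        by (rule iexp_approx1)
      have s: "(\<Sum>k \<le> (1::nat). (\<i> * of_real (u * \<xi>))^k / fact k) = 1 + \<i> * of_real (u * \<xi>)"
        by simp
      have a': "norm (exp (\<i> * of_real (u * \<xi>)) - 1 - \<i> * of_real (u * \<xi>)) \<le> u\<^sup>2 / 2 * \<xi>\<^sup>2"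
        using a unfolding s by (simp add: power2_eq_square abs_mult algebra_simps)
      have "norm (exp (\<i> * of_real (x * \<xi>)) * ((exp (\<i> * of_real (u * \<xi>)) - 1 - \<i> * of_real (u * \<xi>)) * g \<xi>))
          = norm (exp (\<i> * of_real (u * \<xi>)) - 1 - \<i> * of_real (u * \<xi>)) * norm (g \<xi>)"
        by (simp add: norm_mult)
      also have "\<dots> \<le> u\<^sup>2 / 2 * \<xi>\<^sup>2 * norm (g \<xi>)"
        using a' by (intro mult_right_mono) auto
      also have "\<dots> = u\<^sup>2 / 2 * norm ((of_real \<xi>)^2 * g \<xi>)"
        by (simp add: norm_mult norm_power)
      finally show ?thesis .
    qed
    have ig: "integrable lborel (\<lambda>\<xi>. exp (\<i> * of_real (x * \<xi>)) * ((exp (\<i> * of_real (u * \<xi>)) - 1 - \<i> * of_real (u * \<xi>)) * g \<xi>))"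
    proof (rule Bochner_Integration.integrable_bound)
      show "integrable lborel (\<lambda>\<xi>. u\<^sup>2 / 2 * norm ((of_real \<xi>)^2 * g \<xi>))"
        using integrable_norm[OF g2] by simp
      show "(\<lambda>\<xi>. exp (\<i> * of_real (x * \<xi>)) * ((exp (\<i> * of_real (u * \<xi>)) - 1 - \<i> * of_real (u * \<xi>)) * g \<xi>)) \<in> borel_measurable lborel"
        using borel_measurable_integrable[OF g0] by measurable
      show "AE \<xi> in lborel. norm (exp (\<i> * of_real (x * \<xi>)) * ((exp (\<i> * of_real (u * \<xi>)) - 1 - \<i> * of_real (u * \<xi>)) * g \<xi>)) \<le> norm (u\<^sup>2 / 2 * norm ((of_real \<xi>)^2 * g \<xi>))"
        using pw by (simp add: order_trans[OF pw])
    qed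
    have "norm (\<Phi> y - \<Phi> x - (y - x) *\<^sub>R D) \<le> (\<integral>\<xi>. u\<^sup>2 / 2 * norm ((of_real \<xi>)^2 * g \<xi>) \<partial>lborel)"
      unfolding eq
    proof (rule Bochner_Integration.integral_norm_bound_integral[OF ig])
      show "integrable lborel (\<lambda>\<xi>. u\<^sup>2 / 2 * norm ((of_real \<xi>)^2 * g \<xi>))"
        using integrable_norm[OF g2] by simp
      show "\<And>\<xi>. \<xi> \<in> space lborel \<Longrightarrow> norm (exp (\<i> * of_real (x * \<xi>)) * ((exp (\<i> * of_real (u * \<xi>)) - 1 - \<i> * of_real (u * \<xi>)) * g \<xi>)) \<le> u\<^sup>2 / 2 * norm ((of_real \<xi>)^2 * g \<xi>)"
        using pw by simp
    qed
    also have "\<dots> = M * (y - x)\<^sup>2" by (simp add: M_def u_def)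
    finally show ?thesis .
  qed
  have "(\<Phi> has_derivative (\<lambda>h. h *\<^sub>R D)) (at x)"
    unfolding has_derivative_at_alt
  proof (intro conjI allI impI)
    show "bounded_linear (\<lambda>h. h *\<^sub>R D)" by (rule bounded_linear_scaleR_left)
    fix e :: real assume e: "e > 0"
    show "\<exists>d>0. \<forall>y. norm (y - x) < d \<longrightarrow> norm (\<Phi> y - \<Phi> x - (y - x) *\<^sub>R D) \<le> e * norm (y - x)"
    proof (intro exI[of _ "e / (M + 1)"] conjI allI impI)
      show "e / (M + 1) > 0" using e M0 by simp
      fix y assume y: "norm (y - x) < e / (M + 1)"
      have "M * \<bar>y - x\<bar> \<le> (M + 1) * \<bar>y - x\<bar>" by (simp add: mult_right_mono)
      also have "\<dots> \<le> e" using y M0 by (simp add: field_simps)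
      finally have k: "M * \<bar>y - x\<bar> \<le> e" .
      have "norm (\<Phi> y - \<Phi> x - (y - x) *\<^sub>R D) \<le> M * (y - x)\<^sup>2" by (rule bound)
      also have "\<dots> = (M * \<bar>y - x\<bar>) * \<bar>y - x\<bar>" by (simp add: power2_eq_square abs_mult_self_eq)
      also have "\<dots> \<le> e * \<bar>y - x\<bar>" using k by (intro mult_right_mono) auto
      finally show "norm (\<Phi> y - \<Phi> x - (y - x) *\<^sub>R D) \<le> e * norm (y - x)" by simp
    qed
  qed
  then show ?thesis unfolding has_vector_derivative_def \<Phi>_def D_def .
qed


lemma xderiv_0: "xderiv 0 f = f" by (simp add: xderiv_def)
lemma xderiv_Suc: "xderiv (Suc l) f = (\<lambda>x. vector_derivative (xderiv l f) (at x))"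
  by (simp add: xderiv_def)

lemma xderiv_fourier:
  fixes h :: "real \<Rightarrow> complex"
  assumes H: "\<And>m. integrable lborel (\<lambda>\<xi>. (of_real \<xi>)^m * h \<xi>)"
  shows "xderiv l (\<lambda>x. \<integral>\<xi>. exp (\<i> * of_real (x * \<xi>)) * h \<xi> \<partial>lborel)
       = (\<lambda>x. \<integral>\<xi>. exp (\<i> * of_real (x * \<xi>)) * ((\<i> * of_real \<xi>)^l * h \<xi>) \<partial>lborel)"
proof (induction l)
  case 0
  then show ?case by (simp add: xderiv_0)
next
  case (Suc l)
  have intj: "integrable lborel (\<lambda>\<xi>. (of_real \<xi>)^j * ((\<i> * of_real \<xi>)^l * h \<xi>))" for j
  proof -
    have "integrable lborel (\<lambda>\<xi>. \<i>^l * ((of_real \<xi>)^(j + l) * h \<xi>))"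
      by (rule integrable_mult_right[OF H])
    moreover have "(\<lambda>\<xi>. \<i>^l * ((of_real \<xi>)^(j + l) * h \<xi>)) = (\<lambda>\<xi>. (of_real \<xi>)^j * ((\<i> * of_real \<xi>)^l * h \<xi>))"
      by (simp add: fun_eq_iff power_mult_distrib power_add mult_ac)
    ultimately show ?thesis by simp
  qed
  have d: "((\<lambda>x. \<integral>\<xi>. exp (\<i> * of_real (x * \<xi>)) * ((\<i> * of_real \<xi>)^l * h \<xi>) \<partial>lborel) has_vector_derivative
          (\<integral>\<xi>. exp (\<i> * of_real (x * \<xi>)) * ((\<i> * of_real \<xi>)^(Suc l) * h \<xi>) \<partial>lborel)) (at x)" for x
  proof -
    have "((\<lambda>x. \<integral>\<xi>. exp (\<i> * of_real (x * \<xi>)) * ((\<i> * of_real \<xi>)^l * h \<xi>) \<partial>lborel) has_vector_derivative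
          (\<integral>\<xi>. exp (\<i> * of_real (x * \<xi>)) * (\<i> * of_real \<xi> * ((\<i> * of_real \<xi>)^l * h \<xi>)) \<partial>lborel)) (at x)"
      using fourier_deriv0[of "\<lambda>\<xi>. (\<i> * of_real \<xi>)^l * h \<xi>" x] intj[of 0] intj[of 1] intj[of 2] by simp
    then show ?thesis by (simp add: mult_ac)
  qed
  show ?case
    unfolding xderiv_Suc Suc.IH using vector_derivative_at[OF d] by simp
qed

lemma gauss_moment_int:
  assumes a: "a > 0"
  shows "integrable lborel (\<lambda>x::real. \<bar>x\<bar>^k * exp (- a * x\<^sup>2))"
proof -
  define \<sigma> where "\<sigma> = 1 / sqrt (2 * a)"
  have s2: "\<sigma>\<^sup>2 = 1 / (2 * a)" using a by (simp add: \<sigma>_def power_divide)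
  have int1: "integrable lborel (\<lambda>x. sqrt (2 * pi * \<sigma>\<^sup>2) * (normal_density 0 \<sigma> x * \<bar>x - 0\<bar>^k))"
    using a by (intro integrable_mult_right integrable_normal_moment_abs) (simp add: \<sigma>_def)
  have eq: "sqrt (2 * pi * \<sigma>\<^sup>2) * (normal_density 0 \<sigma> x * \<bar>x - 0\<bar>^k) = \<bar>x\<bar>^k * exp (- a * x\<^sup>2)" for x
  proof -
    have s0: "\<sigma> > 0" using a by (simp add: \<sigma>_def)
    have p: "sqrt (2 * pi * \<sigma>\<^sup>2) > 0" using s0 pi_gt_zero by simp
    have "- (x - 0)\<^sup>2 / (2 * \<sigma>\<^sup>2) = - a * x\<^sup>2" using a by (simp add: s2)
    moreover have "\<sigma> > 0" using a by (simp add: \<sigma>_def)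
    ultimately show ?thesis using p unfolding normal_density_def by simp
  qed
  show ?thesis using int1 unfolding eq .
qed

lemma sqrt_le_1_plus: "0 \<le> x \<Longrightarrow> sqrt x \<le> 1 + x"
proof -
  assume x: "0 \<le> x"
  have "x \<le> (1 + x)\<^sup>2" using x by (simp add: power2_eq_square algebra_simps)
  then have "sqrt x \<le> sqrt ((1 + x)\<^sup>2)" by (rule real_sqrt_le_mono)
  also have "\<dots> = 1 + x" using x by simp
  finally show ?thesis .
qed

lemma int_moments:
  fixes f :: "real \<Rightarrow> complex"
  assumes a: "a > 0" and C0: "C \<ge> 0" and fm: "f \<in> borel_measurable lborel"
    and fb: "\<And>\<xi>. norm (f \<xi>) \<le> C * (sqrt \<bar>\<xi>\<bar> * exp (- a * \<xi>\<^sup>2))"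
  shows "integrable lborel (\<lambda>\<xi>. (of_real \<xi>)^m * f \<xi>)"
proof (rule Bochner_Integration.integrable_bound)
  show "integrable lborel (\<lambda>\<xi>. C * (\<bar>\<xi>\<bar>^m * exp (- a * \<xi>\<^sup>2)) + C * (\<bar>\<xi>\<bar>^(Suc m) * exp (- a * \<xi>\<^sup>2)))"
    by (intro Bochner_Integration.integrable_add integrable_mult_right gauss_moment_int a)
  show "(\<lambda>\<xi>. (of_real \<xi>)^m * f \<xi>) \<in> borel_measurable lborel" using fm by measurable
  show "AE \<xi> in lborel. norm ((of_real \<xi>)^m * f \<xi>) \<le> norm (C * (\<bar>\<xi>\<bar>^m * exp (- a * \<xi>\<^sup>2)) + C * (\<bar>\<xi>\<bar>^(Suc m) * exp (- a * \<xi>\<^sup>2)))"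
  proof (rule AE_I2)
    fix \<xi> :: real
    have "norm ((of_real \<xi>)^m * f \<xi>) = \<bar>\<xi>\<bar>^m * norm (f \<xi>)" by (simp add: norm_mult norm_power)
    also have "\<dots> \<le> \<bar>\<xi>\<bar>^m * (C * (sqrt \<bar>\<xi>\<bar> * exp (- a * \<xi>\<^sup>2)))" by (intro mult_left_mono fb) auto
    also have "\<dots> \<le> \<bar>\<xi>\<bar>^m * (C * ((1 + \<bar>\<xi>\<bar>) * exp (- a * \<xi>\<^sup>2)))"
      using C0 sqrt_le_1_plus[of "\<bar>\<xi>\<bar>"] by (intro mult_left_mono mult_right_mono) auto
    also have "\<dots> = C * (\<bar>\<xi>\<bar>^m * exp (- a * \<xi>\<^sup>2)) + C * (\<bar>\<xi>\<bar>^(Suc m) * exp (- a * \<xi>\<^sup>2))"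
      by (simp add: algebra_simps)
    also have "\<dots> \<le> norm (C * (\<bar>\<xi>\<bar>^m * exp (- a * \<xi>\<^sup>2)) + C * (\<bar>\<xi>\<bar>^(Suc m) * exp (- a * \<xi>\<^sup>2)))" by simp
    finally show "norm ((of_real \<xi>)^m * f \<xi>) \<le> norm (C * (\<bar>\<xi>\<bar>^m * exp (- a * \<xi>\<^sup>2)) + C * (\<bar>\<xi>\<bar>^(Suc m) * exp (- a * \<xi>\<^sup>2)))" .
  qed
qed

definition k1 :: "real \<Rightarrow> real \<Rightarrow> real \<Rightarrow> real \<Rightarrow> real \<Rightarrow> complex" where
  "k1 \<epsilon> \<nu> t y \<xi> = exp (of_real (- \<nu> * t * \<xi>\<^sup>2)) * FR (t * \<epsilon> / \<xi>) y"

lemma norm_FR: "norm (FR c y) = sqrt (pi / \<bar>c\<bar>)"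
proof -
  have "norm (exp (- \<i> * of_real (pi * sgn c / 4))) = 1"
    by (simp add: norm_exp_eq_Re)
  then show ?thesis by (simp add: FR_def norm_mult norm_exp_eq_Re)
qed

lemma sqrt_FR_arg:
  assumes "\<epsilon> \<in> {-1, 1}" "t > 0"
  shows "sqrt (pi / \<bar>t * \<epsilon> / \<xi>\<bar>) = sqrt (pi / t) * sqrt \<bar>\<xi>\<bar>"
proof (cases "\<xi> = 0")
  case True then show ?thesis by simp
next
  case False
  have e1: "\<bar>t * \<epsilon>\<bar> = t" using assms by auto
  have "pi / \<bar>t * \<epsilon> / \<xi>\<bar> = pi / t * \<bar>\<xi>\<bar>" using False e1 by (simp add: abs_divide)
  then show ?thesis by (simp only: real_sqrt_mult)
qed

lemma norm_k1:
  assumes "\<epsilon> \<in> {-1, 1}" "t > 0"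
  shows "norm (k1 \<epsilon> \<nu> t y \<xi>) = sqrt (pi / t) * (sqrt \<bar>\<xi>\<bar> * exp (- (\<nu> * t) * \<xi>\<^sup>2))"
  using sqrt_FR_arg[OF assms, of \<xi>] by (simp add: k1_def norm_mult norm_FR norm_exp_eq_Re)

lemma k1_measurable: "k1 \<epsilon> \<nu> t y \<in> borel_measurable lborel"
  unfolding k1_def[abs_def] FR_def by measurable

definition c0 :: complex where "c0 = 1 / (4 * of_real (pi\<^sup>2))"

lemma inner_pw:
  assumes "\<xi> \<noteq> 0"
  shows "exp (\<i> * of_real (x * \<xi> + y * \<eta>)) * exp (of_real (- \<nu> * t * \<xi>\<^sup>2) + \<i> * of_real (t * (\<xi> ^ 3 - \<epsilon> * \<eta>\<^sup>2 / \<xi>)))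
    = (exp (\<i> * of_real (x * \<xi>)) * exp (of_real (- \<nu> * t * \<xi>\<^sup>2)) * exp (\<i> * of_real (t * \<xi> ^ 3))) * exp (\<i> * of_real (y * \<eta> - (t * \<epsilon> / \<xi>) * \<eta>\<^sup>2))"
proof -
  have rid: "t * (\<xi> ^ 3 - \<epsilon> * \<eta>\<^sup>2 / \<xi>) = t * \<xi> ^ 3 - (t * \<epsilon> / \<xi>) * \<eta>\<^sup>2"
    using assms by (simp add: field_simps)
  have "\<i> * of_real (x * \<xi> + y * \<eta>) + (of_real (- \<nu> * t * \<xi>\<^sup>2) + \<i> * of_real (t * (\<xi> ^ 3 - \<epsilon> * \<eta>\<^sup>2 / \<xi>)))
      = \<i> * of_real (x * \<xi>) + of_real (- \<nu> * t * \<xi>\<^sup>2) + \<i> * of_real (t * \<xi> ^ 3) + \<i> * of_real (y * \<eta> - (t * \<epsilon> / \<xi>) * \<eta>\<^sup>2)"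
    unfolding rid by (simp add: algebra_simps)
  then show ?thesis by (simp only: exp_add[symmetric])
qed

lemma k1e3_moments:
  assumes eps: "\<epsilon> \<in> {-1, 1}" and t: "t > 0" and nu: "\<nu> > 0"
  shows "integrable lborel (\<lambda>\<xi>. (of_real \<xi>)^m * (c0 * (k1 \<epsilon> \<nu> t y \<xi> * exp (\<i> * of_real (t * \<xi> ^ 3)))))"
proof (rule int_moments[where a = "\<nu> * t" and C = "norm c0 * sqrt (pi / t)"])
  show "\<nu> * t > 0" using nu t by simp
  show "norm c0 * sqrt (pi / t) \<ge> 0" using t by simp
  show "(\<lambda>\<xi>. c0 * (k1 \<epsilon> \<nu> t y \<xi> * exp (\<i> * of_real (t * \<xi> ^ 3)))) \<in> borel_measurable lborel"
    using k1_measurable by measurable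
  fix \<xi> :: real
  show "norm (c0 * (k1 \<epsilon> \<nu> t y \<xi> * exp (\<i> * of_real (t * \<xi> ^ 3)))) \<le> norm c0 * sqrt (pi / t) * (sqrt \<bar>\<xi>\<bar> * exp (- (\<nu> * t) * \<xi>\<^sup>2))"
    using norm_k1[OF eps t] by (simp add: norm_mult norm_exp_eq_Re)
qed

lemma k1_moments:
  assumes eps: "\<epsilon> \<in> {-1, 1}" and t: "t > 0" and nu: "\<nu> > 0"
  shows "integrable lborel (\<lambda>\<xi>. (of_real \<xi>)^m * (c0 * k1 \<epsilon> \<nu> t y \<xi>))"
proof (rule int_moments[where a = "\<nu> * t" and C = "norm c0 * sqrt (pi / t)"])
  show "\<nu> * t > 0" using nu t by simp
  show "norm c0 * sqrt (pi / t) \<ge> 0" using t by simp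
  show "(\<lambda>\<xi>. c0 * k1 \<epsilon> \<nu> t y \<xi>) \<in> borel_measurable lborel"
    using k1_measurable by measurable
  fix \<xi> :: real
  show "norm (c0 * k1 \<epsilon> \<nu> t y \<xi>) \<le> norm c0 * sqrt (pi / t) * (sqrt \<bar>\<xi>\<bar> * exp (- (\<nu> * t) * \<xi>\<^sup>2))"
    using norm_k1[OF eps t] by (simp add: norm_mult)
qed

lemma S_repr:
  assumes eps: "\<epsilon> \<in> {-1, 1}" and t: "t > 0" and nu: "\<nu> > 0"
  shows "S_kernel \<epsilon> \<nu> x y t = (\<integral>\<xi>. exp (\<i> * of_real (x * \<xi>)) * (c0 * (k1 \<epsilon> \<nu> t y \<xi> * exp (\<i> * of_real (t * \<xi> ^ 3)))) \<partial>lborel)"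
proof -
  define f where "f \<xi> = exp (\<i> * of_real (x * \<xi>)) * (k1 \<epsilon> \<nu> t y \<xi> * exp (\<i> * of_real (t * \<xi> ^ 3)))" for \<xi>
  have inner: "integral UNIV (\<lambda>\<eta>::real. exp (\<i> * of_real (x * \<xi> + y * \<eta>)) * exp (of_real (- \<nu> * t * \<xi>\<^sup>2) + \<i> * of_real (t * (\<xi> ^ 3 - \<epsilon> * \<eta>\<^sup>2 / \<xi>)))) = f \<xi>"
    if xi: "\<xi> \<noteq> 0" for \<xi>
  proof -
    define B where "B = exp (\<i> * of_real (x * \<xi>)) * exp (of_real (- \<nu> * t * \<xi>\<^sup>2)) * exp (\<i> * of_real (t * \<xi> ^ 3))"
    have c: "t * \<epsilon> / \<xi> \<noteq> 0" using eps t xi by auto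
    have "((\<lambda>\<eta>. B * exp (\<i> * of_real (y * \<eta> - (t * \<epsilon> / \<xi>) * \<eta>\<^sup>2))) has_integral B * FR (t * \<epsilon> / \<xi>) y) UNIV"
      by (rule has_integral_mult_right[OF fresnel_UNIV[OF c]])
    then have "integral UNIV (\<lambda>\<eta>. B * exp (\<i> * of_real (y * \<eta> - (t * \<epsilon> / \<xi>) * \<eta>\<^sup>2))) = B * FR (t * \<epsilon> / \<xi>) y"
      by (rule integral_unique)
    moreover have "B * FR (t * \<epsilon> / \<xi>) y = f \<xi>" by (simp add: B_def f_def k1_def mult_ac)
    ultimately show ?thesis unfolding inner_pw[OF xi] B_def by simp
  qed
  have intf: "integrable lborel f"
  proof -
    have "integrable lborel (\<lambda>\<xi>. exp (\<i> * of_real (x * \<xi>)) * ((of_real \<xi>)^0 * (c0 * (k1 \<epsilon> \<nu> t y \<xi> * exp (\<i> * of_real (t * \<xi> ^ 3))))))"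
      by (rule integrable_expmult[OF k1e3_moments[OF eps t nu]])
    then have "integrable lborel (\<lambda>\<xi>. (1 / c0) * (exp (\<i> * of_real (x * \<xi>)) * ((of_real \<xi>)^0 * (c0 * (k1 \<epsilon> \<nu> t y \<xi> * exp (\<i> * of_real (t * \<xi> ^ 3)))))))"
      by (rule integrable_mult_right)
    moreover have "c0 \<noteq> 0" by (simp add: c0_def)
    ultimately show ?thesis unfolding f_def[abs_def] by simp
  qed
  have "integral UNIV (\<lambda>\<xi>. integral UNIV (\<lambda>\<eta>::real. exp (\<i> * of_real (x * \<xi> + y * \<eta>)) * exp (of_real (- \<nu> * t * \<xi>\<^sup>2) + \<i> * of_real (t * (\<xi> ^ 3 - \<epsilon> * \<eta>\<^sup>2 / \<xi>)))))
      = integral UNIV f"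
  proof (rule integral_spike[of "{0}"])
    show "negligible {0::real}" by simp
    fix \<xi> :: real assume "\<xi> \<in> UNIV - {0}"
    then have "\<xi> \<noteq> 0" by simp
    from inner[OF this] show "f \<xi> = integral UNIV (\<lambda>\<eta>::real. exp (\<i> * of_real (x * \<xi> + y * \<eta>)) * exp (of_real (- \<nu> * t * \<xi>\<^sup>2) + \<i> * of_real (t * (\<xi> ^ 3 - \<epsilon> * \<eta>\<^sup>2 / \<xi>))))"
      by (rule sym)
  qed
  also have "\<dots> = (\<integral>\<xi>. f \<xi> \<partial>lborel)" by (rule integral_lborel[OF intf])
  finally have "S_kernel \<epsilon> \<nu> x y t = c0 * (\<integral>\<xi>. f \<xi> \<partial>lborel)"
    unfolding S_kernel_def c0_def by simp
  also have "\<dots> = (\<integral>\<xi>. c0 * f \<xi> \<partial>lborel)" by simp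
  finally show ?thesis by (simp add: f_def mult_ac)
qed

definition thK :: "real \<Rightarrow> real \<Rightarrow> real \<Rightarrow> real \<Rightarrow> real \<Rightarrow> real" where
  "thK \<epsilon> t x y \<xi> = x * \<xi> - pi * sgn (t * \<epsilon> / \<xi>) / 4 + y\<^sup>2 / (4 * (t * \<epsilon> / \<xi>))"

definition qK :: "real \<Rightarrow> real \<Rightarrow> real \<Rightarrow> real \<Rightarrow> real \<Rightarrow> real \<Rightarrow> real" where
  "qK \<epsilon> \<nu> t x y \<xi> = exp (- \<nu> * t * \<xi>\<^sup>2) * sqrt (pi / \<bar>t * \<epsilon> / \<xi>\<bar>) * cos (thK \<epsilon> t x y \<xi>)"

lemma w_form:
  "exp (\<i> * of_real (x * \<xi>)) * (c0 * k1 \<epsilon> \<nu> t y \<xi>) =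
   of_real (1 / (4 * pi\<^sup>2) * exp (- \<nu> * t * \<xi>\<^sup>2) * sqrt (pi / \<bar>t * \<epsilon> / \<xi>\<bar>)) * cis (thK \<epsilon> t x y \<xi>)"
proof -
  have e: "cis (thK \<epsilon> t x y \<xi>) = exp (\<i> * of_real (x * \<xi>)) * exp (- \<i> * of_real (pi * sgn (t * \<epsilon> / \<xi>) / 4)) * exp (\<i> * of_real (y\<^sup>2 / (4 * (t * \<epsilon> / \<xi>))))"
  proof -
    have "\<i> * of_real (thK \<epsilon> t x y \<xi>) = \<i> * of_real (x * \<xi>) + - \<i> * of_real (pi * sgn (t * \<epsilon> / \<xi>) / 4) + \<i> * of_real (y\<^sup>2 / (4 * (t * \<epsilon> / \<xi>)))"
      unfolding thK_def by (simp only: of_real_add of_real_diff distrib_left) (simp add: algebra_simps)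
    then show ?thesis unfolding cis_conv_exp by (simp only: exp_add)
  qed
  show ?thesis unfolding e k1_def FR_def c0_def
    by (simp add: exp_of_real[symmetric] mult_ac)
qed


lemma thK_neg: "thK \<epsilon> t x y (- \<xi>) = - thK \<epsilon> t x y \<xi>"
  by (simp add: thK_def sgn_minus)

lemma qK_even: "qK \<epsilon> \<nu> t x y (- \<xi>) = qK \<epsilon> \<nu> t x y \<xi>"
  by (simp add: qK_def thK_neg)

lemma qK_0: "qK \<epsilon> \<nu> t x y 0 = 0"
  by (simp add: qK_def)

lemma w_neg: "exp (\<i> * of_real (x * (- \<xi>))) * (c0 * k1 \<epsilon> \<nu> t y (- \<xi>)) = cnj (exp (\<i> * of_real (x * \<xi>)) * (c0 * k1 \<epsilon> \<nu> t y \<xi>))"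
  unfolding w_form by (simp add: thK_neg cis_cnj)

lemma Re_w: "Re (exp (\<i> * of_real (x * \<xi>)) * (c0 * k1 \<epsilon> \<nu> t y \<xi>)) = 1 / (4 * pi\<^sup>2) * qK \<epsilon> \<nu> t x y \<xi>"
  unfolding w_form by (simp add: qK_def)

lemma w_integral:
  assumes eps: "\<epsilon> \<in> {-1, 1}" and t: "t > 0" and nu: "\<nu> > 0"
  shows "(\<integral>\<xi>. exp (\<i> * of_real (x * \<xi>)) * (c0 * k1 \<epsilon> \<nu> t y \<xi>) \<partial>lborel)
       = of_real (1 / (4 * pi\<^sup>2) * (2 * integral {0<..} (qK \<epsilon> \<nu> t x y)))"
proof -
  define w where "w \<xi> = exp (\<i> * of_real (x * \<xi>)) * (c0 * k1 \<epsilon> \<nu> t y \<xi>)" for \<xi>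
  define q where "q = qK \<epsilon> \<nu> t x y"
  have intw: "integrable lborel w"
    using integrable_expmult[OF k1_moments[OF eps t nu, of 0 y], of x] unfolding w_def[abs_def] by simp
  have "(\<integral>\<xi>. w \<xi> \<partial>lborel) = \<bar>- 1\<bar> *\<^sub>R (\<integral>\<xi>. w (0 + (- 1) * \<xi>) \<partial>lborel)"
    by (rule lborel_integral_real_affine) simp
  also have "\<dots> = (\<integral>\<xi>. cnj (w \<xi>) \<partial>lborel)"
  proof -
    have wn: "w (0 + (- 1) * \<xi>) = cnj (w \<xi>)" for \<xi>
    proof -
      have "w (0 + (- 1) * \<xi>) = w (- \<xi>)" by simp
      also have "\<dots> = cnj (w \<xi>)" unfolding w_def by (rule w_neg)
      finally show ?thesis .
    qed
    show ?thesis by (simp only: wn) simp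
  qed
  also have "\<dots> = cnj (\<integral>\<xi>. w \<xi> \<partial>lborel)" by simp
  finally have cj: "(\<integral>\<xi>. w \<xi> \<partial>lborel) = cnj (\<integral>\<xi>. w \<xi> \<partial>lborel)" .
  then have real: "(\<integral>\<xi>. w \<xi> \<partial>lborel) = of_real (Re (\<integral>\<xi>. w \<xi> \<partial>lborel))"
  proof -
    have "Im (\<integral>\<xi>. w \<xi> \<partial>lborel) = Im (cnj (\<integral>\<xi>. w \<xi> \<partial>lborel))" using cj by (rule arg_cong)
    then have "Im (\<integral>\<xi>. w \<xi> \<partial>lborel) = 0" by simp
    then show ?thesis by (simp add: complex_eq_iff)
  qed
  have ReI: "Re (\<integral>\<xi>. w \<xi> \<partial>lborel) = (\<integral>\<xi>. Re (w \<xi>) \<partial>lborel)"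
    using integral_Re[OF intw] by simp
  have Rew: "Re (w \<xi>) = 1 / (4 * pi\<^sup>2) * q \<xi>" for \<xi> unfolding w_def q_def by (rule Re_w)
  have intq: "integrable lborel q"
  proof -
    have "integrable lborel (\<lambda>\<xi>. (4 * pi\<^sup>2) * Re (w \<xi>))" using intw by simp
    then show ?thesis by (simp add: Rew)
  qed
  have intq1: "integrable lborel (\<lambda>\<xi>. indicator {0<..} \<xi> *\<^sub>R q \<xi>)"
    by (rule integrable_mult_indicator[OF _ intq]) simp
  have intq2: "integrable lborel (\<lambda>\<xi>. indicator {0<..} (0 + (- 1) * \<xi>) *\<^sub>R q (0 + (- 1) * \<xi>))"
    using lborel_integrable_real_affine[OF intq1, of "- 1" 0] by simp
  have split: "q \<xi> = indicator {0<..} \<xi> *\<^sub>R q \<xi> + indicator {0<..} (0 + (- 1) * \<xi>) *\<^sub>R q (0 + (- 1) * \<xi>)" for \<xi>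
  proof (cases "\<xi> > 0")
    case True then show ?thesis by (simp add: indicator_def)
  next
    case False
    show ?thesis
    proof (cases "\<xi> = 0")
      case True then show ?thesis by (simp add: q_def qK_0)
    next
      case False
      with \<open>\<not> \<xi> > 0\<close> have "\<xi> < 0" by simp
      then show ?thesis by (simp add: indicator_def q_def qK_even)
    qed
  qed
  have reflq: "(\<integral>\<xi>. indicator {0<..} \<xi> *\<^sub>R q \<xi> \<partial>lborel) = \<bar>- 1\<bar> *\<^sub>R (\<integral>\<xi>. indicator {0<..} (0 + (- 1) * \<xi>) *\<^sub>R q (0 + (- 1) * \<xi>) \<partial>lborel)"
    by (rule lborel_integral_real_affine) simp
  have "(\<integral>\<xi>. q \<xi> \<partial>lborel) = (\<integral>\<xi>. indicator {0<..} \<xi> *\<^sub>R q \<xi> + indicator {0<..} (0 + (- 1) * \<xi>) *\<^sub>R q (0 + (- 1) * \<xi>) \<partial>lborel)"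
    by (subst split) (rule refl)
  also have "\<dots> = (\<integral>\<xi>. indicator {0<..} \<xi> *\<^sub>R q \<xi> \<partial>lborel) + (\<integral>\<xi>. indicator {0<..} (0 + (- 1) * \<xi>) *\<^sub>R q (0 + (- 1) * \<xi>) \<partial>lborel)"
    by (rule Bochner_Integration.integral_add[OF intq1 intq2])
  also have "\<dots> = 2 * (\<integral>\<xi>. indicator {0<..} \<xi> *\<^sub>R q \<xi> \<partial>lborel)" using reflq by simp
  also have "(\<integral>\<xi>. indicator {0<..} \<xi> *\<^sub>R q \<xi> \<partial>lborel) = integral {0<..} q"
  proof -
    have si: "set_integrable lborel {0<..} q" unfolding set_integrable_def by (rule intq1)
    show ?thesis using set_borel_integral_eq_integral(2)[OF si] unfolding set_lebesgue_integral_def .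
  qed
  finally have qI: "(\<integral>\<xi>. q \<xi> \<partial>lborel) = 2 * integral {0<..} q" .
  have "(\<integral>\<xi>. Re (w \<xi>) \<partial>lborel) = 1 / (4 * pi\<^sup>2) * (\<integral>\<xi>. q \<xi> \<partial>lborel)"
    unfolding Rew by simp
  then show ?thesis
    using real ReI qI unfolding w_def[abs_def] q_def by simp
qed

lemma pw_const:
  assumes a: "a > 0" and xi: "\<xi> > 0"
  shows "2 * a * \<xi> * (a * \<xi>\<^sup>2) powr (-1/4) = 2 * a powr (3/4) * sqrt \<xi>"
proof -
  have "(a * \<xi>\<^sup>2) powr (-1/4) = a powr (-1/4) * (\<xi>\<^sup>2) powr (-1/4)"
    using a xi by (simp add: powr_mult)
  also have "(\<xi>\<^sup>2) powr (-1/4) = \<xi> powr (-1/2)"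
  proof -
    have "\<xi>\<^sup>2 = \<xi> powr 2" using xi by (simp add: powr_realpow)
    then show ?thesis by (simp add: powr_powr)
  qed
  finally have e: "(a * \<xi>\<^sup>2) powr (-1/4) = a powr (-1/4) * \<xi> powr (-1/2)" .
  have e1: "a * a powr (-1/4) = a powr (3/4)"
    using powr_add[of a 1 "-1/4"] a by simp
  have e2: "\<xi> * \<xi> powr (-1/2) = sqrt \<xi>"
    using powr_add[of \<xi> 1 "-1/2"] xi by (simp add: powr_half_sqrt)
  have "2 * a * \<xi> * (a * \<xi>\<^sup>2) powr (-1/4) = 2 * (a * a powr (-1/4)) * (\<xi> * \<xi> powr (-1/2))"
    unfolding e by (simp add: mult_ac)
  also have "\<dots> = 2 * a powr (3/4) * sqrt \<xi>" unfolding e1 e2 ..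
  finally show ?thesis .
qed

lemma arg_eq:
  assumes eps: "\<epsilon> \<in> {-1, 1}" and t: "t > 0" and nu: "\<nu> > 0" and xi: "\<xi> > 0"
  shows "x * t powr (-1/2) * sqrt (\<nu> * t * \<xi>\<^sup>2 / \<nu>) + (y * t powr (-3/4))\<^sup>2 / (4 * \<epsilon>) * sqrt (\<nu> * t * \<xi>\<^sup>2 / \<nu>) - pi / 4 * \<epsilon>
       = thK \<epsilon> t x y \<xi>"
proof -
  have st: "sqrt (\<nu> * t * \<xi>\<^sup>2 / \<nu>) = sqrt t * \<xi>"
    using nu xi by (simp add: real_sqrt_mult)
  have sq: "sqrt t = t powr (1/2)" using t by (simp add: powr_half_sqrt)
  have p1: "t powr (-1/2) * sqrt t = 1"
    unfolding sq using t by (simp add: powr_add[symmetric])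
  have p2: "(t powr (-3/4))\<^sup>2 * sqrt t = 1 / t"
  proof -
    have "(t powr (-3/4))\<^sup>2 * sqrt t = t powr (-3/4) * t powr (-3/4) * t powr (1/2)"
      unfolding sq by (simp add: power2_eq_square)
    also have "\<dots> = t powr (-1)" by (simp add: powr_add[symmetric])
    also have "\<dots> = 1 / t" using t by (simp add: powr_minus divide_inverse)
    finally show ?thesis .
  qed
  have lhs: "x * t powr (-1/2) * sqrt (\<nu> * t * \<xi>\<^sup>2 / \<nu>) + (y * t powr (-3/4))\<^sup>2 / (4 * \<epsilon>) * sqrt (\<nu> * t * \<xi>\<^sup>2 / \<nu>) - pi / 4 * \<epsilon>
      = x * \<xi> * (t powr (-1/2) * sqrt t) + y\<^sup>2 * \<xi> / (4 * \<epsilon>) * ((t powr (-3/4))\<^sup>2 * sqrt t) - pi / 4 * \<epsilon>"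
    unfolding st by (simp add: power_mult_distrib mult_ac)
  show ?thesis
    using eps
  proof
    assume e: "\<epsilon> = -1"
    have "sgn (t * \<epsilon> / \<xi>) = -1" using e t xi by simp
    then show ?thesis unfolding lhs p1 p2 thK_def using e t xi by (simp add: field_simps)
  next
    assume "\<epsilon> \<in> {1}"
    then have e: "\<epsilon> = 1" by simp
    have "sgn (t * \<epsilon> / \<xi>) = 1" using e t xi by simp
    then show ?thesis unfolding lhs p1 p2 thK_def using e t xi by (simp add: field_simps)
  qed
qed

lemma qK_integrable:
  assumes eps: "\<epsilon> \<in> {-1, 1}" and t: "t > 0" and nu: "\<nu> > 0"
  shows "integrable lborel (qK \<epsilon> \<nu> t x y)"
proof -
  have intw: "integrable lborel (\<lambda>\<xi>. exp (\<i> * of_real (x * \<xi>)) * (c0 * k1 \<epsilon> \<nu> t y \<xi>))"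
    using integrable_expmult[OF k1_moments[OF eps t nu, of 0 y], of x] by simp
  have "integrable lborel (\<lambda>\<xi>. (4 * pi\<^sup>2) * Re (exp (\<i> * of_real (x * \<xi>)) * (c0 * k1 \<epsilon> \<nu> t y \<xi>)))"
    by (rule integrable_mult_right[OF integrable_Re[OF intw]])
  then show ?thesis unfolding Re_w by simp
qed

lemma const_K:
  assumes t: "t > 0" and nu: "\<nu> > 0"
  shows "t powr (-5/4) * (1 / (4 * pi powr (3/2) * \<nu> powr (3/4))) * (2 * (\<nu> * t) powr (3/4) / sqrt (pi / t)) = 1 / (4 * pi\<^sup>2) * 2"
proof -
  have s1: "sqrt (pi / t) = pi powr (1/2) / t powr (1/2)"
    using t by (simp add: real_sqrt_divide powr_half_sqrt)
  have s2: "(\<nu> * t) powr (3/4) = \<nu> powr (3/4) * t powr (3/4)" using t nu by (simp add: powr_mult)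
  have tp: "t powr (-5/4) * t powr (3/4) * t powr (1/2) = 1"
    using t by (simp add: powr_add[symmetric])
  have pp: "pi powr (3/2) * pi powr (1/2) = pi\<^sup>2"
  proof -
    have "pi powr (3/2) * pi powr (1/2) = pi powr 2" by (simp add: powr_add[symmetric])
    also have "\<dots> = pi\<^sup>2" by (simp add: powr_realpow)
    finally show ?thesis .
  qed
  have nz: "\<nu> powr (3/4) > 0" "pi powr (3/2) > 0" "pi powr (1/2) > 0" "t powr (1/2) > 0" using nu t by auto
  have "t powr (-5/4) * (1 / (4 * pi powr (3/2) * \<nu> powr (3/4))) * (2 * (\<nu> * t) powr (3/4) / sqrt (pi / t))
      = 2 * (t powr (-5/4) * t powr (3/4) * t powr (1/2)) / (4 * (pi powr (3/2) * pi powr (1/2)))"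
    unfolding s1 s2 using nz by (simp add: field_simps)
  also have "\<dots> = 1 / (4 * pi\<^sup>2) * 2" unfolding tp pp by simp
  finally show ?thesis .
qed

lemma K_star_cov:
  assumes eps: "\<epsilon> \<in> {-1, 1}" and t: "t > 0" and nu: "\<nu> > 0"
  shows "integral {0<..} (\<lambda>r. r powr (-1/4) * exp (- r) * cos (x * t powr (-1/2) * sqrt (r / \<nu>) + (y * t powr (-3/4))\<^sup>2 / (4 * \<epsilon>) * sqrt (r / \<nu>) - pi / 4 * \<epsilon>))
       = (2 * (\<nu> * t) powr (3/4) / sqrt (pi / t)) * integral {0<..} (qK \<epsilon> \<nu> t x y)"
proof -
  define F where "F r = r powr (-1/4) * exp (- r) * cos (x * t powr (-1/2) * sqrt (r / \<nu>) + (y * t powr (-3/4))\<^sup>2 / (4 * \<epsilon>) * sqrt (r / \<nu>) - pi / 4 * \<epsilon>)" for r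
  define q where "q = qK \<epsilon> \<nu> t x y"
  define a where "a = \<nu> * t"
  define \<kappa> where "\<kappa> = 2 * (\<nu> * t) powr (3/4) / sqrt (pi / t)"
  have a: "a > 0" using t nu by (simp add: a_def)
  have pt: "sqrt (pi / t) > 0" using t by simp
  have pw: "\<bar>2 * a * \<xi>\<bar> * F (a * \<xi>\<^sup>2) = \<kappa> * q \<xi>" if xi: "\<xi> > 0" for \<xi>
  proof -
    have arg: "x * t powr (-1/2) * sqrt (a * \<xi>\<^sup>2 / \<nu>) + (y * t powr (-3/4))\<^sup>2 / (4 * \<epsilon>) * sqrt (a * \<xi>\<^sup>2 / \<nu>) - pi / 4 * \<epsilon> = thK \<epsilon> t x y \<xi>"
      unfolding a_def by (rule arg_eq[OF eps t nu xi])
    have "\<bar>2 * a * \<xi>\<bar> * F (a * \<xi>\<^sup>2) = (2 * a * \<xi> * (a * \<xi>\<^sup>2) powr (-1/4)) * exp (- (a * \<xi>\<^sup>2)) * cos (thK \<epsilon> t x y \<xi>)"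
      unfolding F_def arg using a xi by (simp add: mult_ac)
    also have "\<dots> = 2 * a powr (3/4) * sqrt \<xi> * exp (- (a * \<xi>\<^sup>2)) * cos (thK \<epsilon> t x y \<xi>)"
      unfolding pw_const[OF a xi] ..
    also have "\<dots> = \<kappa> * q \<xi>"
      unfolding \<kappa>_def q_def qK_def sqrt_FR_arg[OF eps t] a_def using pt xi by (simp add: field_simps)
    finally show ?thesis .
  qed
  have iq: "integrable lborel q" unfolding q_def by (rule qK_integrable[OF eps t nu])
  have si: "set_integrable lborel {0<..} q"
    unfolding set_integrable_def by (rule integrable_mult_indicator[OF _ iq]) simp
  have sin: "set_integrable lborel {0<..} (\<lambda>\<xi>. norm (q \<xi>))"
    unfolding set_integrable_def by (rule integrable_mult_indicator[OF _ integrable_norm[OF iq]]) simp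
  have qi: "q integrable_on {0<..}" by (rule set_borel_integral_eq_integral(1)[OF si])
  have qni: "(\<lambda>\<xi>. norm (q \<xi>)) integrable_on {0<..}" by (rule set_borel_integral_eq_integral(1)[OF sin])
  have ai: "(\<lambda>\<xi>. \<bar>2 * a * \<xi>\<bar> * F (a * \<xi>\<^sup>2)) absolutely_integrable_on {0<..}"
    unfolding absolutely_integrable_on_def
  proof
    show "(\<lambda>\<xi>. \<bar>2 * a * \<xi>\<bar> * F (a * \<xi>\<^sup>2)) integrable_on {0<..}"
      by (rule integrable_eq[OF integrable_on_cmult_left[OF qi, of \<kappa>]]) (simp add: pw)
    show "(\<lambda>\<xi>. norm (\<bar>2 * a * \<xi>\<bar> * F (a * \<xi>\<^sup>2))) integrable_on {0<..}"
    proof (rule integrable_eq[OF integrable_on_cmult_left[OF qni, of "\<bar>\<kappa>\<bar>"]])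
      fix \<xi> :: real assume "\<xi> \<in> {0<..}"
      then have e: "\<bar>2 * a * \<xi>\<bar> * F (a * \<xi>\<^sup>2) = \<kappa> * q \<xi>" by (simp add: pw)
      show "of_real \<bar>\<kappa>\<bar> * norm (q \<xi>) = norm (\<bar>2 * a * \<xi>\<bar> * F (a * \<xi>\<^sup>2))"
        unfolding e by (simp add: abs_mult)
    qed
  qed
  have ii: "integral {0<..} (\<lambda>\<xi>. \<bar>2 * a * \<xi>\<bar> * F (a * \<xi>\<^sup>2)) = \<kappa> * integral {0<..} q"
  proof -
    have "integral {0<..} (\<lambda>\<xi>. \<bar>2 * a * \<xi>\<bar> * F (a * \<xi>\<^sup>2)) = integral {0<..} (\<lambda>\<xi>. \<kappa> * q \<xi>)"
      by (rule integral_cong) (simp add: pw)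
    then show ?thesis by simp
  qed
  have cov: "F absolutely_integrable_on ((\<lambda>\<xi>. a * \<xi>\<^sup>2) ` {0<..}) \<and> integral ((\<lambda>\<xi>. a * \<xi>\<^sup>2) ` {0<..}) F = \<kappa> * integral {0<..} q"
  proof (rule has_absolute_integral_change_of_variables_1'[where g' = "\<lambda>\<xi>. 2 * a * \<xi>", THEN iffD1])
    show "{0::real<..} \<in> sets lebesgue" by (rule sets_completionI_sets) simp
    show "((\<lambda>\<xi>. a * \<xi>\<^sup>2) has_field_derivative 2 * a * \<xi>) (at \<xi> within {0<..})" for \<xi>
      by (auto intro!: derivative_eq_intros)
    show "inj_on (\<lambda>\<xi>. a * \<xi>\<^sup>2) {0<..}"
      using a by (auto simp: inj_on_def power2_eq_iff_nonneg)
    show "(\<lambda>\<xi>. \<bar>2 * a * \<xi>\<bar> * F (a * \<xi>\<^sup>2)) absolutely_integrable_on {0<..} \<and>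
        integral {0<..} (\<lambda>\<xi>. \<bar>2 * a * \<xi>\<bar> * F (a * \<xi>\<^sup>2)) = \<kappa> * integral {0<..} q"
      using ai ii by simp
  qed
  have img: "(\<lambda>\<xi>. a * \<xi>\<^sup>2) ` {0<..} = {0<..}"
  proof
    show "(\<lambda>\<xi>. a * \<xi>\<^sup>2) ` {0<..} \<subseteq> {0<..}" using a by auto
    show "{0<..} \<subseteq> (\<lambda>\<xi>. a * \<xi>\<^sup>2) ` {0<..}"
    proof
      fix r :: real assume r: "r \<in> {0<..}"
      have "r = a * (sqrt (r / a))\<^sup>2" using a r by simp
      moreover have "sqrt (r / a) \<in> {0<..}" using a r by simp
      ultimately show "r \<in> (\<lambda>\<xi>. a * \<xi>\<^sup>2) ` {0<..}" by blast
    qed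
  qed
  show ?thesis using cov unfolding img F_def[abs_def] \<kappa>_def q_def by simp
qed

lemma K_repr:
  assumes eps: "\<epsilon> \<in> {-1, 1}" and t: "t > 0" and nu: "\<nu> > 0"
  shows "of_real (K_kernel \<epsilon> \<nu> x y t) = (\<integral>\<xi>. exp (\<i> * of_real (x * \<xi>)) * (c0 * k1 \<epsilon> \<nu> t y \<xi>) \<partial>lborel)"
proof -
  have "K_kernel \<epsilon> \<nu> x y t = t powr (-5/4) * (1 / (4 * pi powr (3/2) * \<nu> powr (3/4))) * ((2 * (\<nu> * t) powr (3/4) / sqrt (pi / t)) * integral {0<..} (qK \<epsilon> \<nu> t x y))"
    unfolding K_kernel_def K_star_def K_star_cov[OF eps t nu] by simp
  also have "\<dots> = (t powr (-5/4) * (1 / (4 * pi powr (3/2) * \<nu> powr (3/4))) * (2 * (\<nu> * t) powr (3/4) / sqrt (pi / t))) * integral {0<..} (qK \<epsilon> \<nu> t x y)"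
    by (simp only: mult_ac)
  also have "\<dots> = 1 / (4 * pi\<^sup>2) * (2 * integral {0<..} (qK \<epsilon> \<nu> t x y))"
    unfolding const_K[OF t nu] by simp
  finally show ?thesis unfolding w_integral[OF eps t nu] by simp
qed

lemma G_integrable:
  assumes a: "a > 0"
  shows "integrable lborel (\<lambda>\<xi>::real. \<bar>\<xi>\<bar>^n * sqrt \<bar>\<xi>\<bar> * exp (- a * \<xi>\<^sup>2))"
proof (rule Bochner_Integration.integrable_bound)
  show "integrable lborel (\<lambda>\<xi>::real. \<bar>\<xi>\<bar>^n * exp (- a * \<xi>\<^sup>2) + \<bar>\<xi>\<bar>^(Suc n) * exp (- a * \<xi>\<^sup>2))"
    by (intro Bochner_Integration.integrable_add gauss_moment_int a)
  show "(\<lambda>\<xi>::real. \<bar>\<xi>\<bar>^n * sqrt \<bar>\<xi>\<bar> * exp (- a * \<xi>\<^sup>2)) \<in> borel_measurable lborel" by measurable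
  show "AE \<xi> in lborel. norm (\<bar>\<xi>\<bar>^n * sqrt \<bar>\<xi>\<bar> * exp (- a * \<xi>\<^sup>2)) \<le> norm (\<bar>\<xi>\<bar>^n * exp (- a * \<xi>\<^sup>2) + \<bar>\<xi>\<bar>^(Suc n) * exp (- a * \<xi>\<^sup>2))"
  proof (rule AE_I2)
    fix \<xi> :: real
    have "\<bar>\<xi>\<bar>^n * sqrt \<bar>\<xi>\<bar> * exp (- a * \<xi>\<^sup>2) \<le> \<bar>\<xi>\<bar>^n * (1 + \<bar>\<xi>\<bar>) * exp (- a * \<xi>\<^sup>2)"
      using sqrt_le_1_plus[of "\<bar>\<xi>\<bar>"] by (intro mult_right_mono mult_left_mono) auto
    also have "\<dots> = \<bar>\<xi>\<bar>^n * exp (- a * \<xi>\<^sup>2) + \<bar>\<xi>\<bar>^(Suc n) * exp (- a * \<xi>\<^sup>2)"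
      by (simp add: algebra_simps)
    finally show "norm (\<bar>\<xi>\<bar>^n * sqrt \<bar>\<xi>\<bar> * exp (- a * \<xi>\<^sup>2)) \<le> norm (\<bar>\<xi>\<bar>^n * exp (- a * \<xi>\<^sup>2) + \<bar>\<xi>\<bar>^(Suc n) * exp (- a * \<xi>\<^sup>2))"
      by simp
  qed
qed

lemma G_scale:
  assumes a: "a > 0"
  shows "(\<integral>\<xi>. \<bar>\<xi>\<bar>^n * sqrt \<bar>\<xi>\<bar> * exp (- a * \<xi>\<^sup>2) \<partial>lborel)
       = a powr (- (2 * real n + 3) / 4) * (\<integral>u. \<bar>u\<bar>^n * sqrt \<bar>u\<bar> * exp (- 1 * u\<^sup>2) \<partial>lborel)"
proof -
  define c where "c = 1 / sqrt a"
  have c: "c > 0" using a by (simp add: c_def)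
  have ac: "a * c\<^sup>2 = 1" using a by (simp add: c_def power_divide)
  have "(\<integral>\<xi>. \<bar>\<xi>\<bar>^n * sqrt \<bar>\<xi>\<bar> * exp (- a * \<xi>\<^sup>2) \<partial>lborel)
      = \<bar>c\<bar> *\<^sub>R (\<integral>u. \<bar>0 + c * u\<bar>^n * sqrt \<bar>0 + c * u\<bar> * exp (- a * (0 + c * u)\<^sup>2) \<partial>lborel)"
    by (rule lborel_integral_real_affine) (use c in simp)
  also have "(\<lambda>u. \<bar>0 + c * u\<bar>^n * sqrt \<bar>0 + c * u\<bar> * exp (- a * (0 + c * u)\<^sup>2))
      = (\<lambda>u. (c^n * sqrt c) * (\<bar>u\<bar>^n * sqrt \<bar>u\<bar> * exp (- 1 * u\<^sup>2)))"
  proof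
    fix u
    have "a * (c * u)\<^sup>2 = (a * c\<^sup>2) * u\<^sup>2" by (simp add: power_mult_distrib)
    then have "- a * (0 + c * u)\<^sup>2 = - 1 * u\<^sup>2" unfolding ac by simp
    then show "\<bar>0 + c * u\<bar>^n * sqrt \<bar>0 + c * u\<bar> * exp (- a * (0 + c * u)\<^sup>2) = (c^n * sqrt c) * (\<bar>u\<bar>^n * sqrt \<bar>u\<bar> * exp (- 1 * u\<^sup>2))"
      using c by (simp add: abs_mult power_mult_distrib real_sqrt_mult mult_ac)
  qed
  also have "\<bar>c\<bar> *\<^sub>R (\<integral>u. (c^n * sqrt c) * (\<bar>u\<bar>^n * sqrt \<bar>u\<bar> * exp (- 1 * u\<^sup>2)) \<partial>lborel)
      = (c * (c^n * sqrt c)) * (\<integral>u. \<bar>u\<bar>^n * sqrt \<bar>u\<bar> * exp (- 1 * u\<^sup>2) \<partial>lborel)"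
    using c by simp
  also have "c * (c^n * sqrt c) = a powr (- (2 * real n + 3) / 4)"
  proof -
    have c1: "c = a powr (-1/2)" using a by (simp add: c_def powr_half_sqrt[symmetric] powr_minus_divide)
    have "c * (c^n * sqrt c) = c powr 1 * (c powr (real n) * c powr (1/2))"
      using c by (simp add: powr_realpow powr_half_sqrt)
    also have "\<dots> = c powr (1 + real n + 1/2)" by (simp only: powr_add[symmetric] add.assoc)
    also have "\<dots> = a powr (-1/2 * (1 + real n + 1/2))" unfolding c1 by (simp add: powr_powr)
    also have "-1/2 * (1 + real n + 1/2) = - (2 * real n + 3) / 4" by (simp add: field_simps)
    finally show ?thesis .
  qed
  finally show ?thesis .
qed

lemma norm_e3m1: "norm (exp (\<i> * of_real u) - 1) \<le> \<bar>u\<bar>"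
  using iexp_approx1[of u 0] by simp

theorem proposition2p5:
  fixes \<epsilon> \<nu> :: real and l :: nat
  assumes "\<epsilon> \<in> {-1, 1}" and "\<nu> > 0"
  shows "\<exists>C>0. \<forall>t>0. \<forall>x y.
           norm (xderiv l (\<lambda>x'. S_kernel \<epsilon> \<nu> x' y t - of_real (K_kernel \<epsilon> \<nu> x' y t)) x)
             \<le> C * t powr (- 7/4 - real l / 2)"
proof -
  note eps = assms(1) and nu = assms(2)
  define n where "n = l + 3"
  define M where "M = (\<integral>u. \<bar>u\<bar>^n * sqrt \<bar>u\<bar> * exp (- 1 * u\<^sup>2) \<partial>lborel)"
  define C0 where "C0 = norm c0 * sqrt pi * M * \<nu> powr (- (2 * real n + 3) / 4)"
  have M0: "M \<ge> 0" unfolding M_def by (rule integral_nonneg_AE) auto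
  have C00: "C0 \<ge> 0" unfolding C0_def using M0 by simp
  show ?thesis
  proof (intro exI[of _ "C0 + 1"] conjI allI impI)
    show "C0 + 1 > 0" using C00 by simp
    fix t x y :: real assume t: "t > 0"
    define h where "h \<xi> = c0 * (k1 \<epsilon> \<nu> t y \<xi> * exp (\<i> * of_real (t * \<xi> ^ 3))) - c0 * k1 \<epsilon> \<nu> t y \<xi>" for \<xi>
    have hm: "integrable lborel (\<lambda>\<xi>. (of_real \<xi>)^m * h \<xi>)" for m
    proof -
      have "integrable lborel (\<lambda>\<xi>. (of_real \<xi>)^m * (c0 * (k1 \<epsilon> \<nu> t y \<xi> * exp (\<i> * of_real (t * \<xi> ^ 3)))) - (of_real \<xi>)^m * (c0 * k1 \<epsilon> \<nu> t y \<xi>))"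
        by (intro Bochner_Integration.integrable_diff k1e3_moments k1_moments eps t nu)
      then show ?thesis by (simp add: h_def algebra_simps)
    qed
    have eqfun: "(\<lambda>x'. S_kernel \<epsilon> \<nu> x' y t - of_real (K_kernel \<epsilon> \<nu> x' y t)) = (\<lambda>x'. \<integral>\<xi>. exp (\<i> * of_real (x' * \<xi>)) * h \<xi> \<partial>lborel)"
    proof
      fix x' :: real
      have i1: "integrable lborel (\<lambda>\<xi>. exp (\<i> * of_real (x' * \<xi>)) * (c0 * (k1 \<epsilon> \<nu> t y \<xi> * exp (\<i> * of_real (t * \<xi> ^ 3)))))"
        using integrable_expmult[OF k1e3_moments[OF eps t nu, of 0 y], of x'] by simp
      have i2: "integrable lborel (\<lambda>\<xi>. exp (\<i> * of_real (x' * \<xi>)) * (c0 * k1 \<epsilon> \<nu> t y \<xi>))"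
        using integrable_expmult[OF k1_moments[OF eps t nu, of 0 y], of x'] by simp
      show "S_kernel \<epsilon> \<nu> x' y t - of_real (K_kernel \<epsilon> \<nu> x' y t) = (\<integral>\<xi>. exp (\<i> * of_real (x' * \<xi>)) * h \<xi> \<partial>lborel)"
        unfolding S_repr[OF eps t nu] K_repr[OF eps t nu]
        using Bochner_Integration.integral_diff[OF i1 i2] by (simp add: h_def algebra_simps)
    qed
    have xd: "xderiv l (\<lambda>x'. S_kernel \<epsilon> \<nu> x' y t - of_real (K_kernel \<epsilon> \<nu> x' y t)) x
        = (\<integral>\<xi>. exp (\<i> * of_real (x * \<xi>)) * ((\<i> * of_real \<xi>)^l * h \<xi>) \<partial>lborel)"
      unfolding eqfun xderiv_fourier[OF hm] ..
    define B where "B = norm c0 * sqrt (pi / t) * t"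
    have B0: "B \<ge> 0" using t by (simp add: B_def)
    have pw: "norm (exp (\<i> * of_real (x * \<xi>)) * ((\<i> * of_real \<xi>)^l * h \<xi>)) \<le> B * (\<bar>\<xi>\<bar>^n * sqrt \<bar>\<xi>\<bar> * exp (- (\<nu> * t) * \<xi>\<^sup>2))" for \<xi>
    proof -
      have hf: "h \<xi> = c0 * k1 \<epsilon> \<nu> t y \<xi> * (exp (\<i> * of_real (t * \<xi> ^ 3)) - 1)"
        by (simp add: h_def algebra_simps)
      have "norm (exp (\<i> * of_real (x * \<xi>)) * ((\<i> * of_real \<xi>)^l * h \<xi>))
          = \<bar>\<xi>\<bar>^l * (norm c0 * norm (k1 \<epsilon> \<nu> t y \<xi>) * norm (exp (\<i> * of_real (t * \<xi> ^ 3)) - 1))"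
        unfolding hf by (simp add: norm_mult norm_power)
      also have "\<dots> \<le> \<bar>\<xi>\<bar>^l * (norm c0 * (sqrt (pi / t) * (sqrt \<bar>\<xi>\<bar> * exp (- (\<nu> * t) * \<xi>\<^sup>2))) * \<bar>t * \<xi> ^ 3\<bar>)"
        unfolding norm_k1[OF eps t]
        using t by (intro mult_left_mono mult_mono norm_e3m1) (auto intro!: mult_nonneg_nonneg)
      also have "\<dots> = B * (\<bar>\<xi>\<bar>^n * sqrt \<bar>\<xi>\<bar> * exp (- (\<nu> * t) * \<xi>\<^sup>2))"
        using t by (simp add: B_def n_def abs_mult power_abs power_add mult_ac)
      finally show ?thesis .
    qed
    have "norm (xderiv l (\<lambda>x'. S_kernel \<epsilon> \<nu> x' y t - of_real (K_kernel \<epsilon> \<nu> x' y t)) x)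
        \<le> (\<integral>\<xi>. B * (\<bar>\<xi>\<bar>^n * sqrt \<bar>\<xi>\<bar> * exp (- (\<nu> * t) * \<xi>\<^sup>2)) \<partial>lborel)"
      unfolding xd
    proof (rule Bochner_Integration.integral_norm_bound_integral)
      show "integrable lborel (\<lambda>\<xi>. exp (\<i> * of_real (x * \<xi>)) * ((\<i> * of_real \<xi>)^l * h \<xi>))"
      proof -
        have "integrable lborel (\<lambda>\<xi>. \<i>^l * ((of_real \<xi>)^l * h \<xi>))" by (rule integrable_mult_right[OF hm])
        then have "integrable lborel (\<lambda>\<xi>. (\<i> * of_real \<xi>)^l * h \<xi>)" by (simp add: power_mult_distrib mult_ac)
        then show ?thesis by (rule integrable_expmult)
      qed
      show "integrable lborel (\<lambda>\<xi>. B * (\<bar>\<xi>\<bar>^n * sqrt \<bar>\<xi>\<bar> * exp (- (\<nu> * t) * \<xi>\<^sup>2)))"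
        using G_integrable[of "\<nu> * t" n] nu t by simp
      show "\<And>\<xi>. \<xi> \<in> space lborel \<Longrightarrow> norm (exp (\<i> * of_real (x * \<xi>)) * ((\<i> * of_real \<xi>)^l * h \<xi>)) \<le> B * (\<bar>\<xi>\<bar>^n * sqrt \<bar>\<xi>\<bar> * exp (- (\<nu> * t) * \<xi>\<^sup>2))"
        by (rule pw)
    qed
    also have "\<dots> = B * ((\<nu> * t) powr (- (2 * real n + 3) / 4) * M)"
      using G_scale[of "\<nu> * t" n] nu t by (simp add: M_def)
    also have "\<dots> = C0 * t powr (- 7/4 - real l / 2)"
    proof -
      have s: "sqrt (pi / t) = sqrt pi * t powr (-1/2)"
        using t by (simp add: real_sqrt_divide powr_half_sqrt[symmetric] powr_minus_divide)
      have p: "(\<nu> * t) powr (- (2 * real n + 3) / 4) = \<nu> powr (- (2 * real n + 3) / 4) * t powr (- (2 * real n + 3) / 4)"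
        using t nu by (simp add: powr_mult)
      have tt: "t powr (-1/2) * t * t powr (- (2 * real n + 3) / 4) = t powr (- 7/4 - real l / 2)"
      proof -
        have "t powr (-1/2) * t * t powr (- (2 * real n + 3) / 4) = t powr (-1/2) * t powr 1 * t powr (- (2 * real n + 3) / 4)"
          using t by simp
        also have "\<dots> = t powr (-1/2 + 1 + (- (2 * real n + 3) / 4))"
          by (simp only: powr_add[symmetric])
        also have "-1/2 + 1 + (- (2 * real n + 3) / 4) = - 7/4 - real l / 2"
          by (simp add: n_def field_simps)
        finally show ?thesis .
      qed
      have "B * ((\<nu> * t) powr (- (2 * real n + 3) / 4) * M) = (norm c0 * sqrt pi * M * \<nu> powr (- (2 * real n + 3) / 4)) * (t powr (-1/2) * t * t powr (- (2 * real n + 3) / 4))"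
        unfolding B_def s p by (simp only: mult_ac)
      then show ?thesis unfolding tt C0_def .
    qed
    also have "\<dots> \<le> (C0 + 1) * t powr (- 7/4 - real l / 2)"
      by (intro mult_right_mono) auto
    finally show "norm (xderiv l (\<lambda>x'. S_kernel \<epsilon> \<nu> x' y t - of_real (K_kernel \<epsilon> \<nu> x' y t)) x) \<le> (C0 + 1) * t powr (- 7/4 - real l / 2)" .
  qed
qed

end
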